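(* Suppose $n\ge3$. For $i\ne j$ define $a_i=\frac{(n-1)(1-\omega_i)\eta}{n}$, $a_{ij}=a_i+a_j$, $$h_{ij}=\begin{cases}\frac{(n-1)\eta}{n}\big[(1-\omega_i)^2+\frac{\omega_i(\omega_j-\omega_i)}{n}\big] & \text{if } r_i<a_i,\\ (1-\omega_i)\eta\big[\frac{1-\omega_i}{n}+\frac{n-2}{n-1}\big]+\frac{\omega_i(n-1)(\omega_j-\omega_i)\eta}{n^2} & \text{if } r_i\in[a_i,a_{ij}),\\ \frac{(n-1)\eta}{n}\big[1-\omega_i+\frac{\omega_j-\omega_i}{n}\big] & \text{if } r_i\ge a_{ij},\end{cases}$$ and $c_{ij}=\min\big\{h_{ij}+h_{ji},\ 1-(a_i-h_{ij})I_{\{a_i>h_{ij}\}}-(a_j-h_{ji})I_{\{a_j>h_{ji}\}}\big\}$ ($I$ the indicator function). For any constant $\varepsilon>0$ let $c_\varepsilon=\max_{i\ne j}c_{ij}-\varepsilon$. Then the set $E_{c_\varepsilon}=\{(x_1,\dots,x_n)\in[0,1]^n:\max_{i,j}|x_i-x_j|\ge c_\varepsilon\}$ is finite-time robustly reachable from $[0,1]^n$ under control protocol (C6).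
   Context: $\mathcal V=\{1,\dots,n\}$, confidence thresholds $r_i\in(0,1]$, belief factors $\omega_i\in(0,1)$, $\eta>0$. States $x(t)\in[0,1]^n$. Neighbor set $\mathcal N_i(t)=\{j:|x_j(t)-x_i(t)|\le r_i\}$ (contains $i$), $\Pi_{[0,1]}(y)=\min\{1,\max\{0,y\}\}$, $x_{\rm ave}(t)=\frac1n\sum_ix_i(t)$. Control protocol (C6): $x_i(t+1)=\Pi_{[0,1]}\big(\omega_ix_{\rm ave}(t)+\frac{1-\omega_i}{|\mathcal N_i(t)|}[x_i(t)+\sum_{j\in\mathcal N_i(t)\setminus\{i\}}(x_j(t)+u_{ji}(t)+b_{ji}(t))]\big)$, where for $j\in\mathcal N_i(t)\setminus\{i\}$: $\delta_i(t)\in(0,\eta)$ is a chosen parameter, $u_{ji}(t)\in[-\eta+\delta_i(t),\eta-\delta_i(t)]$ a chosen control input, $b_{ji}(t)\in[-\delta_i(t),\delta_i(t)]$ an arbitrary uncertainty; the choices may depend on $x(0),\dots,x(t)$. A set $S\subseteq[0,1]^n$ is finite-time robustly reachable from $[0,1]^n$ under the protocol if there exist constants $T>0$ and $\varepsilon'\in(0,\eta)$ such that for every $x(0)\in[0,1]^n$, either $x(0)\in S$, or one can choose $\delta_i(t)\in[\varepsilon',\eta)$ and $u_{ji}(t)\in[-\eta+\delta_i(t),\eta-\delta_i(t)]$ ($0\le t<T$, $i\in\mathcal V$, $j\in\mathcal N_i(t)\setminus\{i\}$) guaranteeing that for arbitrary $b_{ji}(t)\in[-\delta_i(t),\delta_i(t)]$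 there is $t\in[1,T]$ with $x(t)\in S$. *)

theory Defs
  imports Complex_Main
begin

(* Agents are indexed by 0..<n (the paper uses 1..n).  A state is a function
   nat => real; only the coordinates i < n are meaningful. *)

definition in_cube :: "nat \<Rightarrow> (nat \<Rightarrow> real) \<Rightarrow> bool" where
  "in_cube n x \<longleftrightarrow> (\<forall>i<n. 0 \<le> x i \<and> x i \<le> 1)"

definition nbr :: "nat \<Rightarrow> (nat \<Rightarrow> real) \<Rightarrow> (nat \<Rightarrow> real) \<Rightarrow> nat \<Rightarrow> nat set" where
  "nbr n r x i = {j. j < n \<and> \<bar>x j - x i\<bar> \<le> r i}"

definition proj01 :: "real \<Rightarrow> real" where
  "proj01 y = min 1 (max 0 y)"

definition xave :: "nat \<Rightarrow> (nat \<Rightarrow> real) \<Rightarrow> real" where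
  "xave n x = (\<Sum>j<n. x j) / real n"

text \<open>One step of protocol (C6); u j i and b j i are the control input and the
  uncertainty on the edge from j to i.\<close>
definition step :: "nat \<Rightarrow> (nat \<Rightarrow> real) \<Rightarrow> (nat \<Rightarrow> real) \<Rightarrow> (nat \<Rightarrow> real)
    \<Rightarrow> (nat \<Rightarrow> nat \<Rightarrow> real) \<Rightarrow> (nat \<Rightarrow> nat \<Rightarrow> real) \<Rightarrow> nat \<Rightarrow> real" where
  "step n r \<omega> x u b i = proj01 (\<omega> i * xave n x
      + (1 - \<omega> i) / real (card (nbr n r x i))
        * (x i + (\<Sum>j \<in> nbr n r x i - {i}. x j + u j i + b j i)))"

fun hist :: "nat \<Rightarrow> (nat \<Rightarrow> real) \<Rightarrow> (nat \<Rightarrow> real)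
    \<Rightarrow> ((nat \<Rightarrow> real) list \<Rightarrow> nat \<Rightarrow> nat \<Rightarrow> real)
    \<Rightarrow> ((nat \<Rightarrow> real) list \<Rightarrow> nat \<Rightarrow> nat \<Rightarrow> real)
    \<Rightarrow> (nat \<Rightarrow> real) \<Rightarrow> nat \<Rightarrow> (nat \<Rightarrow> real) list" where
  "hist n r \<omega> uS bS x0 0 = [x0]"
| "hist n r \<omega> uS bS x0 (Suc t) =
     (let H = hist n r \<omega> uS bS x0 t in H @ [step n r \<omega> (last H) (uS H) (bS H)])"

text \<open>The controller
  chooses delta_i(t) and u_ji(t) as functions of the history x(0),...,x(t);
  the uncertainty b_ji(t) is arbitrary (modelled as an arbitrary function of the
  history, which covers all possible uncertainty sequences since the controller
  is deterministic).\<close>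
definition ft_robust_reachable ::
  "nat \<Rightarrow> (nat \<Rightarrow> real) \<Rightarrow> (nat \<Rightarrow> real) \<Rightarrow> real \<Rightarrow> (nat \<Rightarrow> real) set \<Rightarrow> bool" where
  "ft_robust_reachable n r \<omega> \<eta> S \<longleftrightarrow>
    (\<exists>T::nat. T > 0 \<and> (\<exists>\<epsilon>'::real. 0 < \<epsilon>' \<and> \<epsilon>' < \<eta> \<and>
      (\<forall>x0. in_cube n x0 \<longrightarrow> x0 \<in> S \<or>
        (\<exists>(\<delta>S :: (nat \<Rightarrow> real) list \<Rightarrow> nat \<Rightarrow> real)
            (uS :: (nat \<Rightarrow> real) list \<Rightarrow> nat \<Rightarrow> nat \<Rightarrow> real).
           (\<forall>H i. i < n \<longrightarrow> \<epsilon>' \<le> \<delta>S H i \<and> \<delta>S H i < \<eta>) \<and>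
           (\<forall>H i j. i < n \<longrightarrow> j < n \<longrightarrow>
               - \<eta> + \<delta>S H i \<le> uS H j i \<and> uS H j i \<le> \<eta> - \<delta>S H i) \<and>
           (\<forall>bS :: (nat \<Rightarrow> real) list \<Rightarrow> nat \<Rightarrow> nat \<Rightarrow> real.
              (\<forall>H i j. i < n \<longrightarrow> j < n \<longrightarrow>
                 - \<delta>S H i \<le> bS H j i \<and> bS H j i \<le> \<delta>S H i) \<longrightarrow>
              (\<exists>t. 1 \<le> t \<and> t \<le> T \<and> last (hist n r \<omega> uS bS x0 t) \<in> S))))))"

definition a_coef :: "nat \<Rightarrow> (nat \<Rightarrow> real) \<Rightarrow> real \<Rightarrow> nat \<Rightarrow> real" where
  "a_coef n \<omega> \<eta> i = (real n - 1) * (1 - \<omega> i) * \<eta> / real n"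

definition h_coef :: "nat \<Rightarrow> (nat \<Rightarrow> real) \<Rightarrow> (nat \<Rightarrow> real) \<Rightarrow> real \<Rightarrow> nat \<Rightarrow> nat \<Rightarrow> real" where
  "h_coef n r \<omega> \<eta> i j =
    (if r i < a_coef n \<omega> \<eta> i then
       (real n - 1) * \<eta> / real n * ((1 - \<omega> i)^2 + \<omega> i * (\<omega> j - \<omega> i) / real n)
     else if r i < a_coef n \<omega> \<eta> i + a_coef n \<omega> \<eta> j then
       (1 - \<omega> i) * \<eta> * ((1 - \<omega> i) / real n + (real n - 2) / (real n - 1))
         + \<omega> i * (real n - 1) * (\<omega> j - \<omega> i) * \<eta> / (real n)^2
     else
       (real n - 1) * \<eta> / real n * (1 - \<omega> i + (\<omega> j - \<omega> i) / real n))"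

definition c_coef :: "nat \<Rightarrow> (nat \<Rightarrow> real) \<Rightarrow> (nat \<Rightarrow> real) \<Rightarrow> real \<Rightarrow> nat \<Rightarrow> nat \<Rightarrow> real" where
  "c_coef n r \<omega> \<eta> i j =
    min (h_coef n r \<omega> \<eta> i j + h_coef n r \<omega> \<eta> j i)
        (1 - (a_coef n \<omega> \<eta> i - h_coef n r \<omega> \<eta> i j)
               * (if a_coef n \<omega> \<eta> i > h_coef n r \<omega> \<eta> i j then 1 else 0)
           - (a_coef n \<omega> \<eta> j - h_coef n r \<omega> \<eta> j i)
               * (if a_coef n \<omega> \<eta> j > h_coef n r \<omega> \<eta> j i then 1 else 0))"

definition c_eps :: "nat \<Rightarrow> (nat \<Rightarrow> real) \<Rightarrow> (nat \<Rightarrow> real) \<Rightarrow> real \<Rightarrow> real \<Rightarrow> real" where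
  "c_eps n r \<omega> \<eta> \<epsilon> = Max {c_coef n r \<omega> \<eta> i j | i j. i < n \<and> j < n \<and> i \<noteq> j} - \<epsilon>"

definition E_set :: "nat \<Rightarrow> real \<Rightarrow> (nat \<Rightarrow> real) set" where
  "E_set n c = {x. in_cube n x \<and> Max {\<bar>x i - x j\<bar> | i j. i < n \<and> j < n} \<ge> c}"

end

theory Submission
  imports Defs
begin

lemma proj01_lip: "\<bar>proj01 a - proj01 b\<bar> \<le> \<bar>a - b\<bar>"
  unfolding proj01_def by (auto simp: min_def max_def)

lemma proj01_mono: "a \<le> b \<Longrightarrow> proj01 a \<le> proj01 b"
  unfolding proj01_def by (auto simp: min_def max_def)

lemma proj01_id: "0 \<le> a \<Longrightarrow> a \<le> 1 \<Longrightarrow> proj01 a = a"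
  unfolding proj01_def by auto

lemma proj01_range: "0 \<le> proj01 a" "proj01 a \<le> 1"
  unfolding proj01_def by auto

lemma proj01_ge: "min 1 a \<le> proj01 a" and proj01_le: "proj01 a \<le> max 0 a"
  unfolding proj01_def by auto

definition inside :: "nat \<Rightarrow> (nat \<Rightarrow> real) \<Rightarrow> (nat \<Rightarrow> real) \<Rightarrow> (nat \<Rightarrow> real)
    \<Rightarrow> (nat \<Rightarrow> nat \<Rightarrow> real) \<Rightarrow> (nat \<Rightarrow> nat \<Rightarrow> real) \<Rightarrow> nat \<Rightarrow> real" where
  "inside n r \<omega> x u b i = \<omega> i * xave n x
      + (1 - \<omega> i) / real (card (nbr n r x i))
        * (\<Sum>l\<in>nbr n r x i. x l) + (1 - \<omega> i) / real (card (nbr n r x i)) * (\<Sum>l \<in> nbr n r x i - {i}. u l i + b l i)"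

lemma nbr_fin: "finite (nbr n r x i)" unfolding nbr_def by auto
lemma nbr_self: "i < n \<Longrightarrow> 0 \<le> r i \<Longrightarrow> i \<in> nbr n r x i" unfolding nbr_def by auto
lemma nbr_sub: "nbr n r x i \<subseteq> {..<n}" unfolding nbr_def by auto

lemma step_inside: assumes "i < n" "0 \<le> r i"
  shows "step n r \<omega> x u b i = proj01 (inside n r \<omega> x u b i)"
proof -
  have "x i + (\<Sum>j \<in> nbr n r x i - {i}. x j + u j i + b j i)
     = (\<Sum>l\<in>nbr n r x i. x l) + (\<Sum>l \<in> nbr n r x i - {i}. u l i + b l i)"
    using nbr_self[of i n r x, OF assms] nbr_fin[of n r x i]
    by (simp add: sum.remove[of "nbr n r x i" i] sum.distrib add.assoc)
  then show ?thesis unfolding step_def inside_def by (simp only: distrib_left add.assoc)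
qed

lemma sum_abs_le: "finite A \<Longrightarrow> (\<And>l. l \<in> A \<Longrightarrow> \<bar>f l\<bar> \<le> (e::real)) \<Longrightarrow> \<bar>sum f A\<bar> \<le> real (card A) * e"
proof -
  assume "finite A" "\<And>l. l \<in> A \<Longrightarrow> \<bar>f l\<bar> \<le> e"
  then have "\<bar>sum f A\<bar> \<le> sum (\<lambda>l. \<bar>f l\<bar>) A" "sum (\<lambda>l. \<bar>f l\<bar>) A \<le> real (card A) * e"
    using sum_abs sum_bounded_above[of A "\<lambda>l. \<bar>f l\<bar>" e] by auto
  then show ?thesis by linarith
qed

lemma xave_diff: assumes "n > 0" "\<forall>l<n. \<bar>x l - y l\<bar> \<le> \<sigma>"
  shows "\<bar>xave n x - xave n y\<bar> \<le> \<sigma>"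
proof -
  have "xave n x - xave n y = (\<Sum>l<n. x l - y l) / real n"
    unfolding xave_def by (simp add: sum_subtractf diff_divide_distrib)
  moreover have "\<bar>\<Sum>l<n. x l - y l\<bar> \<le> real n * \<sigma>"
    using sum_abs_le[of "{..<n}" "\<lambda>l. x l - y l" \<sigma>] assms(2) by auto
  moreover have "real n > 0" using assms(1) by simp
  ultimately show ?thesis by (simp add: pos_divide_le_eq mult.commute)
qed

lemma alg: "c \<noteq> 0 \<Longrightarrow> (w::real) * ax + (1 - w) / c * Sx + (1 - w) / c * ((c - 1) * v + Z) - (w * ay + (1 - w) / c * (Sy + (c - 1) * v))
   = w * (ax - ay) + (1 - w) * ((Sx - Sy + Z) / c)"
  by (simp add: algebra_simps diff_divide_distrib add_divide_distrib)

lemma comb: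
  assumes "0 \<le> w" "w \<le> 1" "\<bar>X\<bar> \<le> s" "\<bar>W\<bar> \<le> s + d" "0 \<le> (d::real)"
  shows "\<bar>w * X + (1 - w) * W\<bar> \<le> s + d"
proof -
  have "\<bar>w * X\<bar> \<le> w * s" using assms by (simp add: abs_mult mult_left_mono)
  moreover have "\<bar>(1 - w) * W\<bar> \<le> (1 - w) * (s + d)" using assms by (simp add: abs_mult mult_left_mono)
  moreover have "w * s + (1 - w) * (s + d) \<le> s + d" using assms by (simp add: algebra_simps)
  ultimately show ?thesis using abs_triangle_ineq[of "w * X" "(1 - w) * W"] by linarith
qed

lemma G:
  assumes "n > 0" "k < n" "0 \<le> r k" "0 \<le> \<omega> k" "\<omega> k \<le> 1" "\<sigma> \<ge> 0" "\<delta> \<ge> 0"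
    "\<forall>l<n. \<bar>x l - y l\<bar> \<le> \<sigma>" "\<forall>l<n. l \<noteq> k \<longrightarrow> u l k = v" "\<forall>l<n. \<bar>b l k\<bar> \<le> \<delta>"
  shows "\<bar>inside n r \<omega> x u b k - (\<omega> k * xave n y + (1 - \<omega> k) / real (card (nbr n r x k))
     * ((\<Sum>l\<in>nbr n r x k. y l) + (real (card (nbr n r x k)) - 1) * v))\<bar> \<le> \<sigma> + \<delta>"
proof -
  define N where "N = nbr n r x k"
  define c where "c = real (card N)"
  have fin: "finite N" and kN: "k \<in> N" and sub: "N \<subseteq> {..<n}"
    using nbr_fin nbr_self[of k n r x, OF assms(2,3)] nbr_sub unfolding N_def by auto
  have c1: "c \<ge> 1" unfolding c_def using fin kN by (metis card_0_eq empty_iff less_one not_le of_nat_1 of_nat_le_iff)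
  have cN: "card N \<ge> 1" using fin kN by (metis card_0_eq empty_iff less_one not_le)
  have cm: "real (card (N - {k})) = c - 1" unfolding c_def using fin kN cN by (simp add: of_nat_diff)
  have e1: "\<bar>xave n x - xave n y\<bar> \<le> \<sigma>" using xave_diff[OF assms(1,8)] .
  have e2: "\<bar>(\<Sum>l\<in>N. x l) - (\<Sum>l\<in>N. y l)\<bar> \<le> c * \<sigma>"
  proof -
    have "\<And>l. l \<in> N \<Longrightarrow> \<bar>x l - y l\<bar> \<le> \<sigma>" using sub assms(8) by auto
    then have "\<bar>\<Sum>l\<in>N. x l - y l\<bar> \<le> c * \<sigma>" using sum_abs_le[of N "\<lambda>l. x l - y l" \<sigma>] fin unfolding c_def by blast
    then show ?thesis by (simp only: sum_subtractf)
  qed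
  have su: "(\<Sum>l \<in> N - {k}. u l k + b l k) = (c - 1) * v + (\<Sum>l \<in> N - {k}. b l k)"
  proof -
    have "(\<Sum>l \<in> N - {k}. u l k) = (\<Sum>l \<in> N - {k}. v)"
      using sub assms(9) by (intro sum.cong) auto
    then show ?thesis using cm by (simp add: sum.distrib mult.commute)
  qed
  have e3: "\<bar>\<Sum>l \<in> N - {k}. b l k\<bar> \<le> (c - 1) * \<delta>"
  proof -
    have "\<And>l. l \<in> N - {k} \<Longrightarrow> \<bar>b l k\<bar> \<le> \<delta>" using sub assms(10) by auto
    then show ?thesis using sum_abs_le[of "N - {k}" "\<lambda>l. b l k" \<delta>] fin cm by simp
  qed
  define X where "X = xave n x - xave n y"
  define Y where "Y = (\<Sum>l\<in>N. x l) - (\<Sum>l\<in>N. y l)"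
  define Z where "Z = (\<Sum>l \<in> N - {k}. b l k)"
  have ins: "inside n r \<omega> x u b k = \<omega> k * xave n x + (1 - \<omega> k) / c * (\<Sum>l\<in>N. x l) + (1 - \<omega> k) / c * ((c - 1) * v + Z)"
    unfolding inside_def N_def[symmetric] c_def[symmetric] su Z_def by simp
  have eq: "inside n r \<omega> x u b k - (\<omega> k * xave n y + (1 - \<omega> k) / c * ((\<Sum>l\<in>N. y l) + (c - 1) * v))
     = \<omega> k * X + (1 - \<omega> k) * ((Y + Z) / c)"
    unfolding ins X_def Y_def using alg[of c] c1 by simp
  have "\<bar>(Y + Z) / c\<bar> \<le> \<sigma> + \<delta>"
  proof -
    have r1: "c * \<sigma> + (c - 1) * \<delta> = c * (\<sigma> + \<delta>) - \<delta>" by (simp add: algebra_simps)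
    have a1: "\<bar>Y + Z\<bar> \<le> c * (\<sigma> + \<delta>)" using e2 e3 assms(7) r1 unfolding Y_def Z_def by linarith
    have "\<bar>(Y + Z) / c\<bar> = \<bar>Y + Z\<bar> / c" using c1 by simp
    also have "\<dots> \<le> \<sigma> + \<delta>" using a1 c1 by (simp add: pos_divide_le_eq mult.commute)
    finally show ?thesis .
  qed
  then have "\<bar>\<omega> k * X + (1 - \<omega> k) * ((Y + Z) / c)\<bar> \<le> \<sigma> + \<delta>"
    using comb[of "\<omega> k" X \<sigma> "(Y + Z) / c" \<delta>] e1 assms(4,5,7) unfolding X_def by simp
  then have "\<bar>inside n r \<omega> x u b k - (\<omega> k * xave n y + (1 - \<omega> k) / c * ((\<Sum>l\<in>N. y l) + (c - 1) * v))\<bar> \<le> \<sigma> + \<delta>"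
    by (simp only: eq)
  then show ?thesis unfolding N_def c_def .
qed

lemma G_step:
  assumes "n > 0" "k < n" "0 \<le> r k" "0 \<le> \<omega> k" "\<omega> k \<le> 1" "\<sigma> \<ge> 0" "\<delta> \<ge> 0"
    "\<forall>l<n. \<bar>x l - y l\<bar> \<le> \<sigma>" "\<forall>l<n. l \<noteq> k \<longrightarrow> u l k = v" "\<forall>l<n. \<bar>b l k\<bar> \<le> \<delta>"
  shows "\<bar>step n r \<omega> x u b k - proj01 (\<omega> k * xave n y + (1 - \<omega> k) / real (card (nbr n r x k))
     * ((\<Sum>l\<in>nbr n r x k. y l) + (real (card (nbr n r x k)) - 1) * v))\<bar> \<le> \<sigma> + \<delta>"
  using G[where n=n and k=k and r=r and \<omega>=\<omega> and x=x and u=u and b=b and v=v and \<sigma>=\<sigma> and \<delta>=\<delta> and y=y, OF assms] step_inside[of k n r \<omega> x u b, OF assms(2,3)] proj01_lip order_trans by metis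

lemma nbr_all: "k < n \<Longrightarrow> \<forall>l<n. \<bar>x l - x k\<bar> \<le> r k \<Longrightarrow> nbr n r x k = {..<n}"
  unfolding nbr_def by auto

lemma G_all:
  assumes "n > 0" "k < n" "0 \<le> r k" "0 \<le> \<omega> k" "\<omega> k \<le> 1" "\<sigma> \<ge> 0" "\<delta> \<ge> 0"
    "\<forall>l<n. \<bar>x l - y l\<bar> \<le> \<sigma>" "\<forall>l<n. l \<noteq> k \<longrightarrow> u l k = v" "\<forall>l<n. \<bar>b l k\<bar> \<le> \<delta>"
    "\<forall>l<n. \<bar>x l - x k\<bar> \<le> r k"
  shows "\<bar>step n r \<omega> x u b k - proj01 (\<omega> k * xave n y + (1 - \<omega> k) / real n
     * ((\<Sum>l<n. y l) + (real n - 1) * v))\<bar> \<le> \<sigma> + \<delta>"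
  using G_step[where n=n and k=k and r=r and \<omega>=\<omega> and x=x and u=u and b=b and v=v and \<sigma>=\<sigma> and \<delta>=\<delta> and y=y, OF assms(1-10)] nbr_all[where n=n and k=k and x=x and r=r, OF assms(2,11)] by simp

lemma xave_const: "n > 0 \<Longrightarrow> xave n (\<lambda>l. z) = z"
  unfolding xave_def by simp

lemma G_split:
  assumes "n > 1" "k < n" "0 \<le> r k" "0 \<le> \<omega> k" "\<omega> k \<le> 1" "\<rho> \<ge> 0" "\<delta> \<ge> 0"
    "\<forall>l<n. \<bar>x l - z\<bar> \<le> \<rho>" "\<forall>l<n. l \<noteq> k \<longrightarrow> u l k = v" "\<forall>l<n. \<bar>b l k\<bar> \<le> \<delta>"
    "\<forall>l<n. \<bar>x l - x k\<bar> \<le> r k"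
  shows "\<bar>step n r \<omega> x u b k - proj01 (z + (1 - \<omega> k) * (real n - 1) * v / real n)\<bar> \<le> \<rho> + \<delta>"
proof -
  have "n > 0" using assms by simp
  have e: "\<omega> k * xave n (\<lambda>l. z) + (1 - \<omega> k) / real n * ((\<Sum>l<n. z) + (real n - 1) * v)
     = z + (1 - \<omega> k) * (real n - 1) * v / real n"
    using \<open>n > 0\<close> by (simp add: xave_const field_simps)
  show ?thesis using G_all[where n=n and k=k and r=r and \<omega>=\<omega> and x=x and u=u and b=b and v=v and \<sigma>=\<rho> and \<delta>=\<delta> and y="\<lambda>l. z", OF \<open>n > 0\<close> assms(2-7)] assms(8-11) e by simp
qed

lemma alg2: "(N::real) \<noteq> 0 \<Longrightarrow> m \<noteq> 0 \<Longrightarrow> 1 - w \<noteq> 0 \<Longrightarrow> w * A + (1 - w) / N * (N * A + m * (d * N / (m * (1 - w)))) = A + d"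
  by (simp add: field_simps)

lemma G_shift:
  assumes "n > 1" "k < n" "0 \<le> r k" "0 \<le> \<omega> k" "\<omega> k < 1" "\<delta> \<ge> 0"
    "\<forall>l<n. l \<noteq> k \<longrightarrow> u l k = d * real n / ((real n - 1) * (1 - \<omega> k))" "\<forall>l<n. \<bar>b l k\<bar> \<le> \<delta>"
    "\<forall>l<n. \<bar>x l - x k\<bar> \<le> r k"
  shows "\<bar>step n r \<omega> x u b k - proj01 (xave n x + d)\<bar> \<le> \<delta>"
proof -
  have "n > 0" using assms by simp
  have s: "(\<Sum>l<n. x l) = real n * xave n x" unfolding xave_def using \<open>n > 0\<close> by simp
  have n1: "real n - 1 \<noteq> 0" using assms(1) by simp
  have w1: "1 - \<omega> k \<noteq> 0" using assms(5) by simp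
  have e: "\<omega> k * xave n x + (1 - \<omega> k) / real n * ((\<Sum>l<n. x l) + (real n - 1) * (d * real n / ((real n - 1) * (1 - \<omega> k))))
     = xave n x + d"
    unfolding s using alg2[of "real n" "real n - 1" "\<omega> k"] \<open>n > 0\<close> n1 w1 by simp
  show ?thesis using G_all[where n=n and k=k and r=r and \<omega>=\<omega> and x=x and u=u and b=b and v="d * real n / ((real n - 1) * (1 - \<omega> k))" and \<sigma>=0 and \<delta>=\<delta> and y=x] assms e by simp
qed

lemma mean_bounds:
  assumes "finite N" "N \<noteq> {}" "\<forall>l\<in>N. m \<le> x l \<and> x l \<le> M"
  shows "m \<le> (\<Sum>l\<in>N. x l) / real (card N)" "(\<Sum>l\<in>N. x l) / real (card N) \<le> M"
proof -
  have c: "real (card N) > 0" using assms by auto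
  have "(\<Sum>l\<in>N. x l) \<le> real (card N) * M" using sum_bounded_above[of N x M] assms by auto
  then show "(\<Sum>l\<in>N. x l) / real (card N) \<le> M" using c by (simp add: pos_divide_le_eq mult.commute)
  have "real (card N) * m \<le> (\<Sum>l\<in>N. x l)" using sum_bounded_below[of N m x] assms by auto
  then show "m \<le> (\<Sum>l\<in>N. x l) / real (card N)" using c by (simp add: pos_le_divide_eq mult.commute)
qed

lemma ideal_upper:
  assumes "wm \<le> w" "w \<le> (1::real)" "mean \<le> M" "ave \<le> M"
  shows "w * ave + (1 - w) * mean \<le> M - wm * (M - ave)"
proof -
  have "(1 - w) * mean \<le> (1 - w) * M" using assms by (simp add: mult_left_mono)
  moreover have "wm * (M - ave) \<le> w * (M - ave)" using assms by (simp add: mult_right_mono)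
  ultimately show ?thesis by (simp add: algebra_simps)
qed

lemma ideal_lower:
  assumes "wm \<le> w" "w \<le> (1::real)" "m \<le> mean" "m \<le> ave"
  shows "m + wm * (ave - m) \<le> w * ave + (1 - w) * mean"
proof -
  have "(1 - w) * m \<le> (1 - w) * mean" using assms by (simp add: mult_left_mono)
  moreover have "wm * (ave - m) \<le> w * (ave - m)" using assms by (simp add: mult_right_mono)
  ultimately show ?thesis by (simp add: algebra_simps)
qed

lemma contract_one:
  assumes "n > 0" "k < n" "0 \<le> r k" "wm \<le> \<omega> k" "\<omega> k \<le> 1" "0 \<le> wm" "\<delta> \<ge> 0"
    "\<forall>l<n. m \<le> x l \<and> x l \<le> M" "\<forall>l<n. u l k = 0" "\<forall>l<n. \<bar>b l k\<bar> \<le> \<delta>"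
  shows "step n r \<omega> x u b k \<le> proj01 (M - wm * (M - xave n x) + \<delta>)"
    "proj01 (m + wm * (xave n x - m) - \<delta>) \<le> step n r \<omega> x u b k"
proof -
  define N where "N = nbr n r x k"
  have fin: "finite N" and kN: "k \<in> N" and sub: "N \<subseteq> {..<n}"
    using nbr_fin nbr_self[of k n r x, OF assms(2,3)] nbr_sub unfolding N_def by auto
  have "\<forall>l\<in>N. m \<le> x l \<and> x l \<le> M" using sub assms(8) by auto
  then have mb: "m \<le> (\<Sum>l\<in>N. x l) / real (card N)" "(\<Sum>l\<in>N. x l) / real (card N) \<le> M"
    using mean_bounds[of N m x M] fin kN by auto
  have ab: "m \<le> xave n x" "xave n x \<le> M"
    using mean_bounds[of "{..<n}" m x M] assms(1,8) unfolding xave_def by auto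
  have g: "\<bar>inside n r \<omega> x u b k - (\<omega> k * xave n x + (1 - \<omega> k) / real (card N)
     * ((\<Sum>l\<in>N. x l) + (real (card N) - 1) * 0))\<bar> \<le> 0 + \<delta>"
    using G[where n=n and k=k and r=r and \<omega>=\<omega> and x=x and u=u and b=b and v=0 and \<sigma>=0 and \<delta>=\<delta> and y=x]
      assms unfolding N_def by auto
  define I where "I = \<omega> k * xave n x + (1 - \<omega> k) * ((\<Sum>l\<in>N. x l) / real (card N))"
  have Ie: "\<omega> k * xave n x + (1 - \<omega> k) / real (card N) * ((\<Sum>l\<in>N. x l) + (real (card N) - 1) * 0) = I"
    unfolding I_def by simp
  have g2: "\<bar>inside n r \<omega> x u b k - I\<bar> \<le> \<delta>" using g Ie by simp
  have st: "step n r \<omega> x u b k = proj01 (inside n r \<omega> x u b k)" using step_inside assms(2,3) by blast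
  have "I \<le> M - wm * (M - xave n x)" unfolding I_def using ideal_upper[OF assms(4,5) mb(2) ab(2)] .
  then have "inside n r \<omega> x u b k \<le> M - wm * (M - xave n x) + \<delta>" using g2 by linarith
  then show "step n r \<omega> x u b k \<le> proj01 (M - wm * (M - xave n x) + \<delta>)" unfolding st by (rule proj01_mono)
  have "m + wm * (xave n x - m) \<le> I" unfolding I_def using ideal_lower[OF assms(4,5) mb(1) ab(1)] .
  then have "m + wm * (xave n x - m) - \<delta> \<le> inside n r \<omega> x u b k" using g2 by linarith
  then show "proj01 (m + wm * (xave n x - m) - \<delta>) \<le> step n r \<omega> x u b k" unfolding st by (rule proj01_mono)
qed

definition spread :: "nat \<Rightarrow> (nat \<Rightarrow> real) \<Rightarrow> real \<Rightarrow> bool" where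
  "spread n x D \<longleftrightarrow> (\<forall>i<n. \<forall>j<n. \<bar>x i - x j\<bar> \<le> D)"

lemma contract:
  assumes "n > 0" "\<forall>k<n. 0 \<le> r k" "\<forall>k<n. wm \<le> \<omega> k \<and> \<omega> k \<le> 1" "0 \<le> wm" "\<delta> \<ge> 0"
    "spread n x D" "\<forall>l<n. \<forall>k<n. u l k = 0" "\<forall>l<n. \<forall>k<n. \<bar>b l k\<bar> \<le> \<delta>"
  shows "spread n (step n r \<omega> x u b) ((1 - wm) * D + 2 * \<delta>)"
proof -
  define M where "M = Max (x ` {..<n})"
  define m where "m = Min (x ` {..<n})"
  have ne: "x ` {..<n} \<noteq> {}" using assms(1) by auto
  have "M \<in> x ` {..<n}" using Max_in[OF finite_imageI[OF finite_lessThan] ne] unfolding M_def .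
  then obtain p where p: "p < n" "M = x p" by auto
  have "m \<in> x ` {..<n}" using Min_in[OF finite_imageI[OF finite_lessThan] ne] unfolding m_def .
  then obtain q where q: "q < n" "m = x q" by auto
  have bnd: "\<forall>l<n. m \<le> x l \<and> x l \<le> M" unfolding M_def m_def by auto
  have MD: "M - m \<le> D" using assms(6) p q unfolding spread_def by fastforce
  have w1: "wm \<le> 1" using assms(1,3) by force
  have mM: "m \<le> M" using bnd assms(1) by force
  have ab: "m \<le> xave n x" "xave n x \<le> M"
    using mean_bounds[of "{..<n}" m x M] assms(1) bnd unfolding xave_def by auto
  define A where "A = M - wm * (M - xave n x) + \<delta>"
  define B where "B = m + wm * (xave n x - m) - \<delta>"
  have AB: "A - B = (1 - wm) * (M - m) + 2 * \<delta>" unfolding A_def B_def by (simp add: algebra_simps)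
  have AB0: "0 \<le> (1 - wm) * (M - m)" using w1 mM by simp
  have le: "(1 - wm) * (M - m) \<le> (1 - wm) * D" using MD w1 by (simp add: mult_left_mono)
  have ub: "\<forall>k<n. step n r \<omega> x u b k \<le> proj01 A" and lb: "\<forall>k<n. proj01 B \<le> step n r \<omega> x u b k"
    unfolding A_def B_def using contract_one[where n=n and r=r and \<omega>=\<omega> and x=x and u=u and b=b and wm=wm and \<delta>=\<delta> and m=m and M=M]
      assms bnd by auto
  have "proj01 A - proj01 B \<le> A - B" using proj01_lip[of A B] AB AB0 assms(5) by simp
  then show ?thesis unfolding spread_def using ub lb AB le
    by (smt (verit))
qed

lemma sum_two: assumes "i < n" "j < n" "i \<noteq> j"
  shows "(\<Sum>l<n. z + (if l = i then p else if l = j then q else 0)) = real n * z + p + (q::real)"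
proof -
  have "(\<Sum>l<n. z + (if l = i then p else if l = j then q else 0))
      = (\<Sum>l<n. z + ((if l = i then p else 0) + (if l = j then q else 0)))"
    using assms(3) by (intro sum.cong) auto
  also have "\<dots> = real n * z + p + q" using assms(1,2) by (simp add: sum.distrib)
  finally show ?thesis .
qed

lemma step2:
  assumes "n \<ge> 3" "i < n" "j < n" "i \<noteq> j" "0 \<le> r i" "0 \<le> \<omega> i" "\<omega> i \<le> 1" "\<sigma> \<ge> 0" "\<delta> \<ge> 0"
    "\<forall>l<n. \<bar>x l - (z + (if l = i then p else if l = j then q else 0))\<bar> \<le> \<sigma>"
    "\<forall>l<n. l \<noteq> i \<longrightarrow> u l i = v" "\<forall>l<n. \<bar>b l i\<bar> \<le> \<delta>"
  shows "r i < \<bar>p\<bar> - 2 * \<sigma> \<Longrightarrow> r i < \<bar>p - q\<bar> - 2 * \<sigma> \<Longrightarrow>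
      \<bar>step n r \<omega> x u b i - proj01 (\<omega> i * (z + (p + q) / real n) + (1 - \<omega> i) * (z + p))\<bar> \<le> \<sigma> + \<delta>"
  and "\<bar>p\<bar> + 2 * \<sigma> \<le> r i \<Longrightarrow> r i < \<bar>p - q\<bar> - 2 * \<sigma> \<Longrightarrow>
      \<bar>step n r \<omega> x u b i - proj01 (\<omega> i * (z + (p + q) / real n) + (1 - \<omega> i) / (real n - 1) * ((real n - 1) * z + p + (real n - 2) * v))\<bar> \<le> \<sigma> + \<delta>"
  and "\<bar>p\<bar> + 2 * \<sigma> \<le> r i \<Longrightarrow> \<bar>p - q\<bar> + 2 * \<sigma> \<le> r i \<Longrightarrow>
      \<bar>step n r \<omega> x u b i - proj01 (\<omega> i * (z + (p + q) / real n) + (1 - \<omega> i) / real n * (real n * z + p + q + (real n - 1) * v))\<bar> \<le> \<sigma> + \<delta>"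
proof -
  define y where "y = (\<lambda>l. z + (if l = i then p else if l = j then q else 0))"
  have n0: "n > 0" using assms(1) by simp
  have xy: "\<forall>l<n. \<bar>x l - y l\<bar> \<le> \<sigma>" using assms(10) unfolding y_def by blast
  have G0: "\<bar>step n r \<omega> x u b i - proj01 (\<omega> i * xave n y + (1 - \<omega> i) / real (card (nbr n r x i))
     * ((\<Sum>l\<in>nbr n r x i. y l) + (real (card (nbr n r x i)) - 1) * v))\<bar> \<le> \<sigma> + \<delta>"
    using G_step[where n=n and k=i and r=r and \<omega>=\<omega> and x=x and u=u and b=b and v=v and \<sigma>=\<sigma> and \<delta>=\<delta> and y=y,
      OF n0 assms(2,5,6,7,8,9) xy assms(11,12)] .
  have sy: "(\<Sum>l<n. y l) = real n * z + p + q" unfolding y_def using sum_two assms(2-4) by blast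
  have ay: "xave n y = z + (p + q) / real n" unfolding xave_def sy using n0 by (simp add: field_simps)
  have dl: "\<And>l. l < n \<Longrightarrow> l \<noteq> i \<Longrightarrow> \<bar>x l - x i\<bar> \<le> \<bar>y l - y i\<bar> + 2 * \<sigma> \<and> \<bar>y l - y i\<bar> - 2 * \<sigma> \<le> \<bar>x l - x i\<bar>"
    using xy assms(2) by (smt (verit))
  have yo: "\<And>l. l \<noteq> i \<Longrightarrow> l \<noteq> j \<Longrightarrow> \<bar>y l - y i\<bar> = \<bar>p\<bar>" unfolding y_def by simp
  have yj: "\<bar>y j - y i\<bar> = \<bar>p - q\<bar>" unfolding y_def using assms(4) by (simp add: abs_minus_commute)
  show "r i < \<bar>p\<bar> - 2 * \<sigma> \<Longrightarrow> r i < \<bar>p - q\<bar> - 2 * \<sigma> \<Longrightarrow>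
      \<bar>step n r \<omega> x u b i - proj01 (\<omega> i * (z + (p + q) / real n) + (1 - \<omega> i) * (z + p))\<bar> \<le> \<sigma> + \<delta>"
  proof -
    assume c1: "r i < \<bar>p\<bar> - 2 * \<sigma>" and c2: "r i < \<bar>p - q\<bar> - 2 * \<sigma>"
    have "nbr n r x i = {i}"
    proof (rule set_eqI)
      fix l show "l \<in> nbr n r x i \<longleftrightarrow> l \<in> {i}"
      proof (cases "l < n \<and> l \<noteq> i")
        case True
        then have "r i < \<bar>x l - x i\<bar>" using dl[of l] yo[of l] yj c1 c2 by (cases "l = j") auto
        then show ?thesis using True unfolding nbr_def by auto
      qed (auto simp: nbr_def assms(2,5))
    qed
    moreover have "y i = z + p" unfolding y_def by simp
    ultimately show ?thesis using G0 ay by simp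
  qed
  show "\<bar>p\<bar> + 2 * \<sigma> \<le> r i \<Longrightarrow> r i < \<bar>p - q\<bar> - 2 * \<sigma> \<Longrightarrow>
      \<bar>step n r \<omega> x u b i - proj01 (\<omega> i * (z + (p + q) / real n) + (1 - \<omega> i) / (real n - 1) * ((real n - 1) * z + p + (real n - 2) * v))\<bar> \<le> \<sigma> + \<delta>"
  proof -
    assume c1: "\<bar>p\<bar> + 2 * \<sigma> \<le> r i" and c2: "r i < \<bar>p - q\<bar> - 2 * \<sigma>"
    have N: "nbr n r x i = {..<n} - {j}"
    proof (rule set_eqI)
      fix l show "l \<in> nbr n r x i \<longleftrightarrow> l \<in> {..<n} - {j}"
      proof (cases "l < n \<and> l \<noteq> i")
        case True
        show ?thesis
        proof (cases "l = j")
          case True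
          then have "r i < \<bar>x l - x i\<bar>" using dl[of l] yj c2 assms(3,4) by auto
          then show ?thesis using True unfolding nbr_def by auto
        next
          case False
          then have "\<bar>x l - x i\<bar> \<le> r i" using dl[of l] yo[of l] c1 \<open>l < n \<and> l \<noteq> i\<close> by auto
          then show ?thesis using False \<open>l < n \<and> l \<noteq> i\<close> unfolding nbr_def by auto
        qed
      qed (auto simp: nbr_def assms(2,4,5))
    qed
    have cN: "real (card (nbr n r x i)) = real n - 1" unfolding N using assms(3) by simp
    have sN: "(\<Sum>l\<in>nbr n r x i. y l) = (real n - 1) * z + p"
    proof -
      have "(\<Sum>l\<in>{..<n} - {j}. y l) = (\<Sum>l<n. y l) - y j" using assms(3) by (simp add: sum_diff1)
      then show ?thesis unfolding N sy using assms(4) unfolding y_def by (simp add: algebra_simps)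
    qed
    have e: "real n - 1 - 1 = real n - 2" by simp
    show ?thesis using G0 unfolding cN sN ay e .
  qed
  show "\<bar>p\<bar> + 2 * \<sigma> \<le> r i \<Longrightarrow> \<bar>p - q\<bar> + 2 * \<sigma> \<le> r i \<Longrightarrow>
      \<bar>step n r \<omega> x u b i - proj01 (\<omega> i * (z + (p + q) / real n) + (1 - \<omega> i) / real n * (real n * z + p + q + (real n - 1) * v))\<bar> \<le> \<sigma> + \<delta>"
  proof -
    assume c1: "\<bar>p\<bar> + 2 * \<sigma> \<le> r i" and c2: "\<bar>p - q\<bar> + 2 * \<sigma> \<le> r i"
    have N: "nbr n r x i = {..<n}"
    proof (rule nbr_all[where n=n and k=i and x=x and r=r, OF assms(2)], intro allI impI)
      fix l assume l: "l < n"
      show "\<bar>x l - x i\<bar> \<le> r i"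
      proof (cases "l = i")
        case False
        then show ?thesis using dl[of l] yo[of l] yj c1 c2 l by (cases "l = j") auto
      qed (simp add: assms(5))
    qed
    show ?thesis using G0 unfolding N sy ay by simp
  qed
qed

lemma alg_c1: "(N::real) \<noteq> 0 \<Longrightarrow>
  w * (z + (t * ((N - 1) * (1 - w) * e / N) + - (t * ((N - 1) * (1 - w') * e / N))) / N) + (1 - w) * (z + t * ((N - 1) * (1 - w) * e / N))
  = z + t * ((N - 1) * e / N * ((1 - w)^2 + w * (w' - w) / N))"
  by (simp add: field_simps power2_eq_square)
lemma alg_c2: "(N::real) \<noteq> 0 \<Longrightarrow> N - 1 \<noteq> 0 \<Longrightarrow>
  w * (z + (t * ((N - 1) * (1 - w) * e / N) + - (t * ((N - 1) * (1 - w') * e / N))) / N) + (1 - w) / (N - 1) * ((N - 1) * z + t * ((N - 1) * (1 - w) * e / N) + (N - 2) * (t * e))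
  = z + t * ((1 - w) * e * ((1 - w) / N + (N - 2) / (N - 1)) + w * (N - 1) * (w' - w) * e / N^2)"
  by (simp add: field_simps power2_eq_square)
lemma alg_c3: "(N::real) \<noteq> 0 \<Longrightarrow>
  w * (z + (t * ((N - 1) * (1 - w) * e / N) + - (t * ((N - 1) * (1 - w') * e / N))) / N) + (1 - w) / N * (N * z + t * ((N - 1) * (1 - w) * e / N) + - (t * ((N - 1) * (1 - w') * e / N)) + (N - 1) * (t * e))
  = z + t * ((N - 1) * e / N * (1 - w + (w' - w) / N))"
  by (simp add: field_simps power2_eq_square)

definition gapok :: "nat \<Rightarrow> (nat \<Rightarrow> real) \<Rightarrow> (nat \<Rightarrow> real) \<Rightarrow> real \<Rightarrow> nat \<Rightarrow> nat \<Rightarrow> real \<Rightarrow> real \<Rightarrow> bool" where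
  "gapok n r \<omega> \<eta> i j \<tau> \<sigma> \<longleftrightarrow>
     (if r i < a_coef n \<omega> \<eta> i then r i < \<tau> * a_coef n \<omega> \<eta> i - 2 * \<sigma>
      else if r i < a_coef n \<omega> \<eta> i + a_coef n \<omega> \<eta> j then
        \<tau> * a_coef n \<omega> \<eta> i + 2 * \<sigma> \<le> r i \<and> r i < \<tau> * (a_coef n \<omega> \<eta> i + a_coef n \<omega> \<eta> j) - 2 * \<sigma>
      else \<tau> * (a_coef n \<omega> \<eta> i + a_coef n \<omega> \<eta> j) + 2 * \<sigma> \<le> r i)"

lemma step2h:
  assumes "n \<ge> 3" "i < n" "j < n" "i \<noteq> j" "0 \<le> r i" "0 \<le> \<omega> i" "\<omega> i \<le> 1" "\<sigma> \<ge> 0" "\<delta> \<ge> 0"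
    "\<forall>l<n. \<bar>x l - (z + (if l = i then t * a_coef n \<omega> \<eta> i else if l = j then - (t * a_coef n \<omega> \<eta> j) else 0))\<bar> \<le> \<sigma>"
    "\<forall>l<n. l \<noteq> i \<longrightarrow> u l i = t * \<eta>" "\<forall>l<n. \<bar>b l i\<bar> \<le> \<delta>"
    "0 \<le> a_coef n \<omega> \<eta> i" "0 \<le> a_coef n \<omega> \<eta> j" "gapok n r \<omega> \<eta> i j \<bar>t\<bar> \<sigma>"
  shows "\<bar>step n r \<omega> x u b i - proj01 (z + t * h_coef n r \<omega> \<eta> i j)\<bar> \<le> \<sigma> + \<delta>"
proof -
  define A where "A = a_coef n \<omega> \<eta> i"
  define A' where "A' = a_coef n \<omega> \<eta> j"
  have pa: "\<bar>t * A\<bar> = \<bar>t\<bar> * A" using assms(13) unfolding A_def by (simp add: abs_mult)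
  have pq: "\<bar>t * A - - (t * A')\<bar> = \<bar>t\<bar> * (A + A')" using assms(13,14) unfolding A_def A'_def
    by (simp add: abs_mult distrib_left[symmetric])
  have tA: "\<bar>t\<bar> * A \<le> \<bar>t\<bar> * (A + A')" using assms(14) unfolding A'_def by (simp add: mult_left_mono)
  note S = step2[where n=n and i=i and j=j and r=r and \<omega>=\<omega> and \<sigma>=\<sigma> and \<delta>=\<delta> and x=x and z=z and p="t * A" and q="- (t * A')"
      and u=u and v="t * \<eta>" and b=b, OF assms(1-9)]
  have X: "\<forall>l<n. \<bar>x l - (z + (if l = i then t * A else if l = j then - (t * A') else 0))\<bar> \<le> \<sigma>"
    using assms(10) unfolding A_def A'_def .
  have n0: "real n \<noteq> 0" "real n - 1 \<noteq> 0" using assms(1) by auto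
  show ?thesis
  proof (cases "r i < A")
    case True
    then have g: "r i < \<bar>t\<bar> * A - 2 * \<sigma>" using assms(15) unfolding gapok_def A_def by simp
    have h: "h_coef n r \<omega> \<eta> i j = (real n - 1) * \<eta> / real n * ((1 - \<omega> i)^2 + \<omega> i * (\<omega> j - \<omega> i) / real n)"
      using True unfolding h_coef_def A_def by simp
    show ?thesis using S(1)[OF X assms(11,12)] g tA pa pq alg_c1[OF n0(1), of "\<omega> i" z t \<eta> "\<omega> j"] h
      unfolding A_def A'_def a_coef_def by auto
  next
    case F1: False
    show ?thesis
    proof (cases "r i < A + A'")
      case True
      then have g: "\<bar>t\<bar> * A + 2 * \<sigma> \<le> r i" "r i < \<bar>t\<bar> * (A + A') - 2 * \<sigma>" using F1 assms(15) unfolding gapok_def A_def A'_def by auto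
      have h: "h_coef n r \<omega> \<eta> i j = (1 - \<omega> i) * \<eta> * ((1 - \<omega> i) / real n + (real n - 2) / (real n - 1))
         + \<omega> i * (real n - 1) * (\<omega> j - \<omega> i) * \<eta> / (real n)^2"
        using True F1 unfolding h_coef_def A_def A'_def by simp
      show ?thesis using S(2)[OF X assms(11,12)] g pa pq alg_c2[OF n0, of "\<omega> i" z t \<eta> "\<omega> j"] h
        unfolding A_def A'_def a_coef_def by auto
    next
      case False
      then have g: "\<bar>t\<bar> * (A + A') + 2 * \<sigma> \<le> r i" using F1 assms(15) unfolding gapok_def A_def A'_def by auto
      have g2: "\<bar>t\<bar> * A + 2 * \<sigma> \<le> r i" using g tA by linarith
      have h: "h_coef n r \<omega> \<eta> i j = (real n - 1) * \<eta> / real n * (1 - \<omega> i + (\<omega> j - \<omega> i) / real n)"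
        using False F1 unfolding h_coef_def A_def A'_def by simp
      show ?thesis using S(3)[OF X assms(11,12)] g g2 pa pq alg_c3[OF n0(1), of "\<omega> i" z t \<eta> "\<omega> j"] h
        unfolding A_def A'_def a_coef_def by auto
    qed
  qed
qed

lemma final_arith:
  fixes aI aJ hI hJ c \<theta> \<delta> \<epsilon> z x1I x1J x2I x2J P Q :: real
  assumes "aI > 0" "aJ > 0" "aI + aJ \<le> 1" "0 < \<theta>" "\<theta> < 1" "\<delta> \<ge> 0"
    "c \<le> hI + hJ" "c \<le> 1 - (aI - hI) * (if aI > hI then 1 else 0) - (aJ - hJ) * (if aJ > hJ then 1 else 0)"
    "(1 - \<theta>) * (\<bar>hI\<bar> + \<bar>hJ\<bar> + aI + aJ + 1) \<le> \<epsilon> / 4" "6 * \<delta> \<le> \<epsilon> / 4" "\<epsilon> > 0"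
    "z = (if hJ \<le> aJ then aJ else if hI \<le> aI then 1 - aI else min hJ (1 - aI))"
    "z + \<theta> * aI - 2 * \<delta> \<le> x1I" "x1J \<le> z - \<theta> * aJ + 2 * \<delta>"
    "min 1 (z + \<theta> * hI) - 3 * \<delta> \<le> x2I" "x2J \<le> max 0 (z + - \<theta> * hJ) + 3 * \<delta>"
  shows "c - \<epsilon> \<le> x1I - x1J \<or> c - \<epsilon> \<le> x2I - x2J"
proof -
  have t1: "\<bar>\<theta> * hI - hI\<bar> \<le> (1 - \<theta>) * \<bar>hI\<bar>"
  proof -
    have "\<theta> * hI - hI = - ((1 - \<theta>) * hI)" by (simp add: algebra_simps)
    then show ?thesis using assms(5) by (simp add: abs_mult)
  qed
  have t2: "\<bar>\<theta> * hJ - hJ\<bar> \<le> (1 - \<theta>) * \<bar>hJ\<bar>"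
  proof -
    have "\<theta> * hJ - hJ = - ((1 - \<theta>) * hJ)" by (simp add: algebra_simps)
    then show ?thesis using assms(5) by (simp add: abs_mult)
  qed
  have t3: "\<theta> * aI = aI - (1 - \<theta>) * aI" "\<theta> * aJ = aJ - (1 - \<theta>) * aJ" by (simp_all add: algebra_simps)
  have e: "(1 - \<theta>) * \<bar>hI\<bar> + (1 - \<theta>) * \<bar>hJ\<bar> + (1 - \<theta>) * aI + (1 - \<theta>) * aJ \<le> \<epsilon> / 4"
    using assms(9) assms(5) by (simp add: algebra_simps)
  have p: "0 \<le> (1 - \<theta>) * \<bar>hI\<bar>" "0 \<le> (1 - \<theta>) * \<bar>hJ\<bar>" "0 \<le> (1 - \<theta>) * aI" "0 \<le> (1 - \<theta>) * aJ"
    using assms by auto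
  have sgn: "\<theta> * hI \<le> max 0 hI" "\<theta> * hJ \<le> max 0 hJ"
  proof -
    have "\<And>h. \<theta> * h \<le> max 0 h"
    proof -
      fix h :: real
      show "\<theta> * h \<le> max 0 h"
      proof (cases "h \<ge> 0")
        case True then show ?thesis using mult_left_le_one_le[of h \<theta>] assms(4,5) by simp
      next
        case False then show ?thesis using mult_pos_neg[of \<theta> h] assms(4) by simp
      qed
    qed
    then show "\<theta> * hI \<le> max 0 hI" "\<theta> * hJ \<le> max 0 hJ" by auto
  qed
  have u1: "hI - (1 - \<theta>) * \<bar>hI\<bar> \<le> \<theta> * hI" "\<theta> * hI \<le> hI + (1 - \<theta>) * \<bar>hI\<bar>" using t1 by (simp_all add: abs_le_iff)
  have u2: "hJ - (1 - \<theta>) * \<bar>hJ\<bar> \<le> \<theta> * hJ" "\<theta> * hJ \<le> hJ + (1 - \<theta>) * \<bar>hJ\<bar>" using t2 by (simp_all add: abs_le_iff)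
  show ?thesis
  proof (cases "hJ \<le> aJ")
    case hJ: True
    show ?thesis
    proof (cases "hI \<le> aI")
      case True
      then have "c \<le> aI + aJ" using assms(7) hJ by linarith
      then show ?thesis using assms(12-14) e p t3 hJ assms(10,11) by auto
    next
      case False
      then have c1: "c \<le> 1 - aJ + hJ" using assms(8) hJ by (cases "aJ > hJ") auto
      have z: "z = aJ" using assms(12) hJ by simp
      have m2: "max 0 (z + - \<theta> * hJ) = aJ - \<theta> * hJ" using z sgn(2) hJ assms(2) by (simp add: max_def split: if_splits)
      have "c - \<epsilon> \<le> x2I - x2J"
      proof (cases "1 \<le> z + \<theta> * hI")
        case True
        then have "min 1 (z + \<theta> * hI) = 1" by simp
        then show ?thesis using assms(15,16) m2 c1 u2 e p assms(10,11) by linarith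
      next
        case False
        then have "min 1 (z + \<theta> * hI) = z + \<theta> * hI" by simp
        then show ?thesis using assms(7,15,16) m2 z u1 u2 e p assms(10,11) by linarith
      qed
      then show ?thesis ..
    qed
  next
    case hJ: False
    show ?thesis
    proof (cases "hI \<le> aI")
      case True
      then have c1: "c \<le> 1 - aI + hI" using assms(8) hJ by (cases "aI > hI") auto
      have z: "z = 1 - aI" using assms(12) hJ True by simp
      have m1: "min 1 (z + \<theta> * hI) = 1 - aI + \<theta> * hI" using z sgn(1) True assms(1) by (simp add: min_def max_def split: if_splits)
      have "c - \<epsilon> \<le> x2I - x2J"
      proof (cases "0 \<le> z + - \<theta> * hJ")
        case True
        then have "max 0 (z + - \<theta> * hJ) = z + - \<theta> * hJ" by simp
        then show ?thesis using assms(7,15,16) m1 z u1 u2 e p assms(10,11) by linarith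
      next
        case False
        then have "max 0 (z + - \<theta> * hJ) = 0" by simp
        then show ?thesis using assms(15,16) m1 c1 u1 e p assms(10,11) by linarith
      qed
      then show ?thesis ..
    next
      case False
      then have c1: "c \<le> 1" using assms(8) hJ by auto
      have z: "z = min hJ (1 - aI)" using assms(12) hJ False by simp
      have "c - \<epsilon> \<le> x2I - x2J"
      proof (cases "hJ \<le> 1 - aI")
        case True
        then have z2: "z = hJ" using z by simp
        have m2: "max 0 (z + - \<theta> * hJ) \<le> (1 - \<theta>) * \<bar>hJ\<bar>" using z2 u2 p by (simp add: max_def)
        show ?thesis
        proof (cases "1 \<le> z + \<theta> * hI")
          case True
          then have "min 1 (z + \<theta> * hI) = 1" by simp
          then show ?thesis using assms(15,16) m2 c1 e p assms(10,11) by linarith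
        next
          case False
          then have "min 1 (z + \<theta> * hI) = z + \<theta> * hI" by simp
          then show ?thesis using assms(7,15,16) m2 z2 u1 e p assms(10,11) by linarith
        qed
      next
        case F2: False
        then have z2: "z = 1 - aI" using z by simp
        have m2: "max 0 (z + - \<theta> * hJ) \<le> (1 - \<theta>) * \<bar>hJ\<bar>" using z2 u2 p F2 by (simp add: max_def)
        have "min 1 (z + \<theta> * hI) \<ge> 1 - (1 - \<theta>) * \<bar>hI\<bar>" using z2 u1 False by (simp add: min_def)
        then show ?thesis using assms(15,16) m2 c1 e p assms(10,11) by linarith
      qed
      then show ?thesis ..
    qed
  qed
qed

lemma hist_len: "length (hist n r \<omega> uS bS x0 t) = Suc t"
  by (induction t) (simp_all add: Let_def)

lemma hist_last0: "last (hist n r \<omega> uS bS x0 0) = x0" by simp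

lemma hist_lastS: "last (hist n r \<omega> uS bS x0 (Suc t)) =
   step n r \<omega> (last (hist n r \<omega> uS bS x0 t)) (uS (hist n r \<omega> uS bS x0 t)) (bS (hist n r \<omega> uS bS x0 t))"
  by (simp add: Let_def)

definition ctrl :: "nat \<Rightarrow> (nat \<Rightarrow> real) \<Rightarrow> real \<Rightarrow> nat \<Rightarrow> nat \<Rightarrow> real \<Rightarrow> real \<Rightarrow> real \<Rightarrow> nat \<Rightarrow> nat
    \<Rightarrow> nat \<Rightarrow> (nat \<Rightarrow> real) \<Rightarrow> nat \<Rightarrow> nat \<Rightarrow> real" where
  "ctrl n \<omega> \<eta> K N z dm \<theta> I J t x l k =
    (if t < K then 0
     else if t < K + N then max (- dm) (min dm (z - xave n x)) * real n / ((real n - 1) * (1 - \<omega> k))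
     else if k = I then \<theta> * \<eta> else if k = J then - (\<theta> * \<eta>) else 0)"

lemma spread_mono: "spread n x D \<Longrightarrow> D \<le> D' \<Longrightarrow> spread n x D'"
  unfolding spread_def by force

lemma step_range: "0 \<le> step n r \<omega> x u b i \<and> step n r \<omega> x u b i \<le> 1"
  unfolding step_def using proj01_range by blast

lemma core_phase:
  fixes X :: "nat \<Rightarrow> nat \<Rightarrow> real" and B :: "nat \<Rightarrow> nat \<Rightarrow> nat \<Rightarrow> real"
  assumes n3: "n \<ge> 3" and rpos: "\<forall>k<n. 0 \<le> r k" and wpos: "\<forall>k<n. 0 < \<omega> k \<and> \<omega> k < 1" and eta: "\<eta> > 0"
    and wm: "0 < wm" "\<forall>k<n. wm \<le> \<omega> k"
    and rm: "0 < rmin" "\<forall>k<n. rmin \<le> r k"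
    and dm: "0 < dm" "\<forall>k<n. dm \<le> a_coef n \<omega> \<eta> k / 2"
    and del: "0 < \<delta>" "(1 - wm) ^ K + 2 * real K * \<delta> \<le> rmin / 2" "\<delta> \<le> dm / 2" "4 * \<delta> \<le> rmin"
    and NN: "real N * dm / 2 > 1"
    and z: "0 \<le> z" "z \<le> 1"
    and X0: "\<forall>l<n. 0 \<le> X 0 l \<and> X 0 l \<le> 1"
    and Xs: "\<forall>t. X (Suc t) = step n r \<omega> (X t) (ctrl n \<omega> \<eta> K N z dm \<theta> I J t (X t)) (B t)"
    and Bb: "\<forall>t. \<forall>l<n. \<forall>k<n. \<bar>B t l k\<bar> \<le> \<delta>"
  shows "\<forall>l<n. \<bar>X (K + N) l - z\<bar> \<le> \<delta>"
proof -
  have n0: "n > 0" "n > 1" using n3 by auto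
  have cube: "\<And>t. \<forall>l<n. 0 \<le> X t l \<and> X t l \<le> 1"
  proof -
    fix t show "\<forall>l<n. 0 \<le> X t l \<and> X t l \<le> 1"
      by (cases t) (use X0 Xs step_range in auto)
  qed
  have wm1: "wm \<le> 1" using wm wpos n0 by force
  have P1: "\<And>t. t \<le> K \<Longrightarrow> spread n (X t) ((1 - wm) ^ t + 2 * real t * \<delta>)"
  proof -
    fix t assume "t \<le> K"
    then show "spread n (X t) ((1 - wm) ^ t + 2 * real t * \<delta>)"
    proof (induction t)
      case 0
      show ?case using cube[of 0] unfolding spread_def by (simp add: abs_le_iff) (smt (verit))
    next
      case (Suc t)
      then have sp: "spread n (X t) ((1 - wm) ^ t + 2 * real t * \<delta>)" by simp
      have u0: "\<forall>l<n. \<forall>k<n. ctrl n \<omega> \<eta> K N z dm \<theta> I J t (X t) l k = 0" using Suc.prems unfolding ctrl_def by simp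
      have wmk: "\<forall>k<n. wm \<le> \<omega> k \<and> \<omega> k \<le> 1" using wm wpos by (simp add: less_imp_le)
      have "spread n (X (Suc t)) ((1 - wm) * ((1 - wm) ^ t + 2 * real t * \<delta>) + 2 * \<delta>)"
        unfolding Xs[rule_format] using contract[OF n0(1) rpos wmk less_imp_le[OF wm(1)] less_imp_le[OF del(1)] sp u0] Bb by blast
      moreover have "(1 - wm) * ((1 - wm) ^ t + 2 * real t * \<delta>) + 2 * \<delta> \<le> (1 - wm) ^ Suc t + 2 * real (Suc t) * \<delta>"
      proof -
        have "(1 - wm) * (2 * real t * \<delta>) \<le> 2 * real t * \<delta>" using wm(1) wm1 del(1)
          by (simp add: mult_left_le_one_le)
        then show ?thesis by (simp add: algebra_simps)
      qed
      ultimately show ?case using spread_mono by blast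
    qed
  qed
  have spK: "spread n (X K) (rmin / 2)" using P1[of K] del(2) spread_mono by blast
  have P2: "\<And>t. t \<le> N \<Longrightarrow> spread n (X (K + t)) (rmin / 2) \<and>
      ((\<forall>l<n. \<bar>X (K + t) l - z\<bar> \<le> \<delta>) \<or> \<bar>xave n (X (K + t)) - z\<bar> \<le> 1 - real t * dm / 2)"
  proof -
    fix t assume "t \<le> N"
    then show "spread n (X (K + t)) (rmin / 2) \<and>
      ((\<forall>l<n. \<bar>X (K + t) l - z\<bar> \<le> \<delta>) \<or> \<bar>xave n (X (K + t)) - z\<bar> \<le> 1 - real t * dm / 2)"
    proof (induction t)
      case 0
      have "0 \<le> xave n (X K)" "xave n (X K) \<le> 1"
        using mean_bounds[of "{..<n}" 0 "X K" 1] cube[of K] n0 unfolding xave_def by auto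
      then have "\<bar>xave n (X K) - z\<bar> \<le> 1" using z by (simp add: abs_le_iff)
      then show ?case using spK by simp
    next
      case (Suc t)
      define x where "x = X (K + t)"
      have IH: "spread n x (rmin / 2)" "(\<forall>l<n. \<bar>x l - z\<bar> \<le> \<delta>) \<or> \<bar>xave n x - z\<bar> \<le> 1 - real t * dm / 2"
        using Suc unfolding x_def by auto
      define d where "d = max (- dm) (min dm (z - xave n x))"
      have nb: "\<forall>k<n. \<forall>l<n. \<bar>x l - x k\<bar> \<le> r k" using IH(1) rm del unfolding spread_def by force
      have ab: "0 \<le> xave n x" "xave n x \<le> 1"
        using mean_bounds[of "{..<n}" 0 x 1] cube[of "K + t"] n0 unfolding xave_def x_def by auto
      have XS: "X (K + Suc t) = step n r \<omega> x (ctrl n \<omega> \<eta> K N z dm \<theta> I J (K + t) x) (B (K + t))"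
        using Xs unfolding x_def by simp
      have near: "\<forall>k<n. \<bar>X (K + Suc t) k - proj01 (xave n x + d)\<bar> \<le> \<delta>"
      proof (intro allI impI)
        fix k assume k: "k < n"
        have "\<forall>l<n. l \<noteq> k \<longrightarrow> ctrl n \<omega> \<eta> K N z dm \<theta> I J (K + t) x l k = d * real n / ((real n - 1) * (1 - \<omega> k))"
          using Suc.prems unfolding ctrl_def d_def by simp
        then show "\<bar>X (K + Suc t) k - proj01 (xave n x + d)\<bar> \<le> \<delta>"
          unfolding XS using G_shift[where n=n and k=k and r=r and \<omega>=\<omega> and \<delta>=\<delta> and u="ctrl n \<omega> \<eta> K N z dm \<theta> I J (K + t) x"
            and d=d and b="B (K + t)" and x=x, OF n0(2) k] rpos wpos k del(1) Bb nb by auto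
      qed
      define c where "c = xave n x + d"
      have c01: "0 \<le> c" "c \<le> 1" unfolding c_def d_def using ab z dm(1) by (auto simp: min_def max_def)
      have pc: "proj01 c = c" using proj01_id c01 by blast
      have near2: "\<forall>k<n. \<bar>X (K + Suc t) k - c\<bar> \<le> \<delta>" using near pc unfolding c_def by simp
      have spr: "spread n (X (K + Suc t)) (rmin / 2)" unfolding spread_def
      proof (intro allI impI)
        fix i j assume "i < n" "j < n"
        then have "\<bar>X (K + Suc t) i - c\<bar> \<le> \<delta>" "\<bar>X (K + Suc t) j - c\<bar> \<le> \<delta>" using near2 by auto
        then show "\<bar>X (K + Suc t) i - X (K + Suc t) j\<bar> \<le> rmin / 2" using del(4) unfolding abs_le_iff by linarith
      qed
      show ?case
      proof (cases "\<bar>z - xave n x\<bar> \<le> dm")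
        case True
        then have "c = z" unfolding c_def d_def by (auto simp: min_def max_def abs_le_iff)
        then show ?thesis using spr near2 by simp
      next
        case False
        have cz: "\<bar>c - z\<bar> = \<bar>xave n x - z\<bar> - dm" using False dm(1) unfolding c_def d_def by (auto simp: min_def max_def abs_if split: if_splits)
        have "\<not> (\<forall>l<n. \<bar>x l - z\<bar> \<le> \<delta>)"
        proof
          assume "\<forall>l<n. \<bar>x l - z\<bar> \<le> \<delta>"
          then have "\<bar>xave n x - xave n (\<lambda>l. z)\<bar> \<le> \<delta>" using xave_diff[OF n0(1), of x "\<lambda>l. z" \<delta>] by simp
          then show False using False del xave_const[OF n0(1)] by simp
        qed
        then have a1: "\<bar>xave n x - z\<bar> \<le> 1 - real t * dm / 2" using IH(2) by blast
        have "\<bar>xave n (X (K + Suc t)) - xave n (\<lambda>l. c)\<bar> \<le> \<delta>" using xave_diff[OF n0(1), of "X (K + Suc t)" "\<lambda>l. c" \<delta>] near2 by simp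
        then have "\<bar>xave n (X (K + Suc t)) - c\<bar> \<le> \<delta>" using xave_const[OF n0(1)] by simp
        then have "\<bar>xave n (X (K + Suc t)) - z\<bar> \<le> 1 - real (Suc t) * dm / 2"
        proof -
          have rs: "real (Suc t) * dm / 2 = real t * dm / 2 + dm / 2" by (simp add: algebra_simps)
          have "\<bar>xave n (X (K + Suc t)) - z\<bar> \<le> \<bar>xave n (X (K + Suc t)) - c\<bar> + \<bar>c - z\<bar>"
            using abs_triangle_ineq[of "xave n (X (K + Suc t)) - c" "c - z"] by simp
          then show ?thesis using \<open>\<bar>xave n (X (K + Suc t)) - c\<bar> \<le> \<delta>\<close> cz a1 del(3) rs by linarith
        qed
        then show ?thesis using spr by simp
      qed
    qed
  qed
  have "(\<forall>l<n. \<bar>X (K + N) l - z\<bar> \<le> \<delta>) \<or> \<bar>xave n (X (K + N)) - z\<bar> \<le> 1 - real N * dm / 2"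
    using P2[of N] by simp
  moreover have "\<not> \<bar>xave n (X (K + N)) - z\<bar> \<le> 1 - real N * dm / 2" using NN by simp
  ultimately show ?thesis by blast
qed

lemma c_facts:
  "c_coef n r \<omega> \<eta> i j \<le> h_coef n r \<omega> \<eta> i j + h_coef n r \<omega> \<eta> j i"
  "c_coef n r \<omega> \<eta> i j \<le> 1 - (a_coef n \<omega> \<eta> i - h_coef n r \<omega> \<eta> i j)
               * (if a_coef n \<omega> \<eta> i > h_coef n r \<omega> \<eta> i j then 1 else 0)
           - (a_coef n \<omega> \<eta> j - h_coef n r \<omega> \<eta> j i)
               * (if a_coef n \<omega> \<eta> j > h_coef n r \<omega> \<eta> j i then 1 else 0)"
  "c_coef n r \<omega> \<eta> i j \<le> 1"
  unfolding c_coef_def by auto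

lemma core_final:
  fixes X :: "nat \<Rightarrow> nat \<Rightarrow> real" and B :: "nat \<Rightarrow> nat \<Rightarrow> nat \<Rightarrow> real"
  assumes n3: "n \<ge> 3" and rpos: "\<forall>k<n. 0 \<le> r k" and wpos: "\<forall>k<n. 0 < \<omega> k \<and> \<omega> k < 1" and eta: "\<eta> > 0"
    and wm: "0 < wm" "\<forall>k<n. wm \<le> \<omega> k"
    and rm: "0 < rmin" "\<forall>k<n. rmin \<le> r k"
    and dm: "0 < dm" "\<forall>k<n. dm \<le> a_coef n \<omega> \<eta> k / 2"
    and del: "0 < \<delta>" "(1 - wm) ^ K + 2 * real K * \<delta> \<le> rmin / 2" "\<delta> \<le> dm / 2" "4 * \<delta> \<le> rmin"
    and NN: "real N * dm / 2 > 1"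
    and z: "0 \<le> z" "z \<le> 1"
    and X0: "\<forall>l<n. 0 \<le> X 0 l \<and> X 0 l \<le> 1"
    and Xs: "\<forall>t. X (Suc t) = step n r \<omega> (X t) (ctrl n \<omega> \<eta> K N z dm \<theta> I J t (X t)) (B t)"
    and Bb: "\<forall>t. \<forall>l<n. \<forall>k<n. \<bar>B t l k\<bar> \<le> \<delta>"
    and IJ: "I < n" "J < n" "I \<noteq> J"
    and th: "0 < \<theta>" "\<theta> < 1"
    and eps: "\<epsilon> > 0" "6 * \<delta> \<le> \<epsilon> / 4"
    and cases: "(a_coef n \<omega> \<eta> I + a_coef n \<omega> \<eta> J > 1 \<and> 1 \<le> z + \<theta> * a_coef n \<omega> \<eta> I \<and> z - \<theta> * a_coef n \<omega> \<eta> J \<le> 0)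
      \<or> (a_coef n \<omega> \<eta> I + a_coef n \<omega> \<eta> J \<le> 1 \<and> a_coef n \<omega> \<eta> J \<le> z \<and> z \<le> 1 - a_coef n \<omega> \<eta> I
         \<and> gapok n r \<omega> \<eta> I J \<theta> (2 * \<delta>) \<and> gapok n r \<omega> \<eta> J I \<theta> (2 * \<delta>)
         \<and> (1 - \<theta>) * (\<bar>h_coef n r \<omega> \<eta> I J\<bar> + \<bar>h_coef n r \<omega> \<eta> J I\<bar> + a_coef n \<omega> \<eta> I + a_coef n \<omega> \<eta> J + 1) \<le> \<epsilon> / 4
         \<and> z = (if h_coef n r \<omega> \<eta> J I \<le> a_coef n \<omega> \<eta> J then a_coef n \<omega> \<eta> J
                else if h_coef n r \<omega> \<eta> I J \<le> a_coef n \<omega> \<eta> I then 1 - a_coef n \<omega> \<eta> I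
                else min (h_coef n r \<omega> \<eta> J I) (1 - a_coef n \<omega> \<eta> I)))"
  shows "\<exists>t. 1 \<le> t \<and> t \<le> K + N + 2 \<and> c_coef n r \<omega> \<eta> I J - \<epsilon> \<le> \<bar>X t I - X t J\<bar>"
proof -
  note ph = core_phase[OF n3 rpos wpos eta wm rm dm del NN z X0 Xs Bb]
  define s where "s = K + N"
  define aI where "aI = a_coef n \<omega> \<eta> I"
  define aJ where "aJ = a_coef n \<omega> \<eta> J"
  have n0: "n > 0" "n > 1" using n3 by auto
  have apos: "\<And>k. k < n \<Longrightarrow> 0 < a_coef n \<omega> \<eta> k"
  proof -
    fix k assume "k < n"
    then have "0 < 1 - \<omega> k" using wpos by simp
    moreover have "0 < real n - 1" using n3 by simp
    ultimately show "0 < a_coef n \<omega> \<eta> k" unfolding a_coef_def using eta n0 by simp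
  qed
  have aIp: "aI > 0" and aJp: "aJ > 0" unfolding aI_def aJ_def using apos IJ by auto
  have near: "\<forall>l<n. \<bar>X s l - z\<bar> \<le> \<delta>" using ph unfolding s_def .
  have nb: "\<forall>k<n. \<forall>l<n. \<bar>X s l - X s k\<bar> \<le> r k"
  proof (intro allI impI)
    fix k l assume "k < n" "l < n"
    then have "\<bar>X s l - z\<bar> \<le> \<delta>" "\<bar>X s k - z\<bar> \<le> \<delta>" "rmin \<le> r k" using near rm by auto
    then show "\<bar>X s l - X s k\<bar> \<le> r k" using del(4) del(1) unfolding abs_le_iff by linarith
  qed
  define v where "v = (\<lambda>k. if k = I then \<theta> * \<eta> else if k = J then - (\<theta> * \<eta>) else 0)"
  have ctrl_s: "\<And>t x l k. s \<le> t \<Longrightarrow> ctrl n \<omega> \<eta> K N z dm \<theta> I J t x l k = v k"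
    unfolding ctrl_def v_def s_def by auto
  have split: "\<forall>k<n. \<bar>X (Suc s) k - proj01 (z + (1 - \<omega> k) * (real n - 1) * v k / real n)\<bar> \<le> \<delta> + \<delta>"
  proof (intro allI impI)
    fix k assume k: "k < n"
    show "\<bar>X (Suc s) k - proj01 (z + (1 - \<omega> k) * (real n - 1) * v k / real n)\<bar> \<le> \<delta> + \<delta>"
      using G_split[where n=n and k=k and r=r and \<omega>=\<omega> and \<rho>=\<delta> and \<delta>=\<delta> and x="X s" and z=z
        and u="ctrl n \<omega> \<eta> K N z dm \<theta> I J s (X s)" and v="v k" and b="B s", OF n0(2) k] Xs near nb Bb rpos wpos k del(1) ctrl_s
      by auto
  qed
  have vI: "(1 - \<omega> I) * (real n - 1) * v I / real n = \<theta> * aI" unfolding v_def aI_def a_coef_def by simp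
  have vJ: "(1 - \<omega> J) * (real n - 1) * v J / real n = - (\<theta> * aJ)" unfolding v_def aJ_def a_coef_def using IJ(3) by simp
  have vO: "\<And>k. k \<noteq> I \<Longrightarrow> k \<noteq> J \<Longrightarrow> (1 - \<omega> k) * (real n - 1) * v k / real n = 0" unfolding v_def by simp
  have x1I: "\<bar>X (Suc s) I - proj01 (z + \<theta> * aI)\<bar> \<le> 2 * \<delta>" using split IJ vI by force
  have x1J: "\<bar>X (Suc s) J - proj01 (z + - (\<theta> * aJ))\<bar> \<le> 2 * \<delta>" using split IJ vJ by force
  have t1: "1 \<le> Suc s" "Suc s \<le> K + N + 2" "1 \<le> Suc (Suc s)" "Suc (Suc s) \<le> K + N + 2" unfolding s_def by auto
  show ?thesis
  proof (cases "aI + aJ > 1")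
    case True
    then have big: "1 \<le> z + \<theta> * aI" "z - \<theta> * aJ \<le> 0" using cases unfolding aI_def aJ_def by auto
    have "proj01 (z + \<theta> * aI) = 1" "proj01 (z + - (\<theta> * aJ)) = 0" using big unfolding proj01_def by auto
    then have "1 - 4 * \<delta> \<le> X (Suc s) I - X (Suc s) J" using x1I x1J unfolding abs_le_iff by linarith
    moreover have "c_coef n r \<omega> \<eta> I J \<le> 1" using c_facts(3) .
    ultimately have "c_coef n r \<omega> \<eta> I J - \<epsilon> \<le> \<bar>X (Suc s) I - X (Suc s) J\<bar>" using eps del(1) by linarith
    then show ?thesis using t1 by blast
  next
    case False
    then have sm: "aI + aJ \<le> 1" "aJ \<le> z" "z \<le> 1 - aI" "gapok n r \<omega> \<eta> I J \<theta> (2 * \<delta>)" "gapok n r \<omega> \<eta> J I \<theta> (2 * \<delta>)"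
      "(1 - \<theta>) * (\<bar>h_coef n r \<omega> \<eta> I J\<bar> + \<bar>h_coef n r \<omega> \<eta> J I\<bar> + aI + aJ + 1) \<le> \<epsilon> / 4"
      "z = (if h_coef n r \<omega> \<eta> J I \<le> aJ then aJ
                else if h_coef n r \<omega> \<eta> I J \<le> aI then 1 - aI
                else min (h_coef n r \<omega> \<eta> J I) (1 - aI))"
      using cases unfolding aI_def aJ_def by auto
    have p1: "proj01 (z + \<theta> * aI) = z + \<theta> * aI"
    proof (rule proj01_id)
      show "0 \<le> z + \<theta> * aI" using z th aIp by simp
      have "\<theta> * aI \<le> aI" using th aIp by simp
      then show "z + \<theta> * aI \<le> 1" using sm by linarith
    qed
    have p2: "proj01 (z + - (\<theta> * aJ)) = z + - (\<theta> * aJ)"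
    proof (rule proj01_id)
      have "\<theta> * aJ \<le> aJ" using th aJp by simp
      then show "0 \<le> z + - (\<theta> * aJ)" using sm by linarith
      have "0 \<le> \<theta> * aJ" using th aJp by simp
      then show "z + - (\<theta> * aJ) \<le> 1" using z by linarith
    qed
    have y1: "\<forall>l<n. \<bar>X (Suc s) l - (z + (if l = I then \<theta> * aI else if l = J then - (\<theta> * aJ) else 0))\<bar> \<le> 2 * \<delta>"
    proof (intro allI impI)
      fix l assume l: "l < n"
      show "\<bar>X (Suc s) l - (z + (if l = I then \<theta> * aI else if l = J then - (\<theta> * aJ) else 0))\<bar> \<le> 2 * \<delta>"
      proof (cases "l = I \<or> l = J")
        case True
        then show ?thesis using x1I x1J p1 p2 IJ by auto
      next
        case False
        then have "\<bar>X (Suc s) l - proj01 z\<bar> \<le> 2 * \<delta>" using split l vO by force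
        then show ?thesis using False proj01_id[OF z] by simp
      qed
    qed
    have y2: "\<forall>l<n. \<bar>X (Suc s) l - (z + (if l = J then (- \<theta>) * aJ else if l = I then - ((- \<theta>) * aI) else 0))\<bar> \<le> 2 * \<delta>"
    proof (intro allI impI)
      fix l assume l: "l < n"
      have "(z + (if l = J then (- \<theta>) * aJ else if l = I then - ((- \<theta>) * aI) else 0))
          = (z + (if l = I then \<theta> * aI else if l = J then - (\<theta> * aJ) else 0))" using IJ(3) by auto
      then show "\<bar>X (Suc s) l - (z + (if l = J then (- \<theta>) * aJ else if l = I then - ((- \<theta>) * aI) else 0))\<bar> \<le> 2 * \<delta>"
        using y1 l by simp
    qed
    have cI: "\<forall>l<n. l \<noteq> I \<longrightarrow> ctrl n \<omega> \<eta> K N z dm \<theta> I J (Suc s) (X (Suc s)) l I = \<theta> * \<eta>"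
      using ctrl_s[of "Suc s"] unfolding v_def by simp
    have cJ: "\<forall>l<n. l \<noteq> J \<longrightarrow> ctrl n \<omega> \<eta> K N z dm \<theta> I J (Suc s) (X (Suc s)) l J = (- \<theta>) * \<eta>"
      using ctrl_s[of "Suc s"] IJ(3) unfolding v_def by simp
    have XS2: "X (Suc (Suc s)) = step n r \<omega> (X (Suc s)) (ctrl n \<omega> \<eta> K N z dm \<theta> I J (Suc s) (X (Suc s))) (B (Suc s))"
      using Xs by simp
    have ge: "0 \<le> 2 * \<delta>" "0 \<le> \<delta>" using del by auto
    have x2I: "\<bar>X (Suc (Suc s)) I - proj01 (z + \<theta> * h_coef n r \<omega> \<eta> I J)\<bar> \<le> 2 * \<delta> + \<delta>"
      unfolding XS2
      apply (rule step2h[OF n3 IJ(1,2,3)])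
      using rpos wpos IJ ge y1 cI Bb aIp aJp sm(4) th unfolding aI_def aJ_def by auto
    have x2J: "\<bar>X (Suc (Suc s)) J - proj01 (z + (- \<theta>) * h_coef n r \<omega> \<eta> J I)\<bar> \<le> 2 * \<delta> + \<delta>"
      unfolding XS2
      apply (rule step2h[OF n3 IJ(2,1) IJ(3)[symmetric]])
      using rpos wpos IJ ge y2 cJ Bb aIp aJp sm(5) th unfolding aI_def aJ_def by auto
    have fa1: "z + \<theta> * aI - 2 * \<delta> \<le> X (Suc s) I" "X (Suc s) J \<le> z - \<theta> * aJ + 2 * \<delta>"
      using x1I x1J p1 p2 unfolding abs_le_iff by auto
    have fa2: "min 1 (z + \<theta> * h_coef n r \<omega> \<eta> I J) - 3 * \<delta> \<le> X (Suc (Suc s)) I"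
      using x2I proj01_ge[of "z + \<theta> * h_coef n r \<omega> \<eta> I J"] unfolding abs_le_iff by linarith
    have fa3: "X (Suc (Suc s)) J \<le> max 0 (z + - \<theta> * h_coef n r \<omega> \<eta> J I) + 3 * \<delta>"
      using x2J proj01_le[of "z + - \<theta> * h_coef n r \<omega> \<eta> J I"] unfolding abs_le_iff by linarith
    have "c_coef n r \<omega> \<eta> I J - \<epsilon> \<le> X (Suc s) I - X (Suc s) J \<or> c_coef n r \<omega> \<eta> I J - \<epsilon> \<le> X (Suc (Suc s)) I - X (Suc (Suc s)) J"
      apply (rule final_arith[OF aIp aJp sm(1) th less_imp_le[OF del(1)]])
      using c_facts[of n r \<omega> \<eta> I J] sm eps fa1 fa2 fa3 unfolding aI_def aJ_def by auto
    then show ?thesis using t1 by (meson abs_ge_self order_trans)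
  qed
qed

lemma E_mem:
  assumes "in_cube n x" "I < n" "J < n" "c \<le> \<bar>x I - x J\<bar>"
  shows "x \<in> E_set n c"
proof -
  let ?S = "{\<bar>x i - x j\<bar> | i j. i < n \<and> j < n}"
  have "?S \<subseteq> (\<lambda>p. \<bar>x (fst p) - x (snd p)\<bar>) ` ({..<n} \<times> {..<n})" by force
  then have fin: "finite ?S" by (rule finite_subset) simp
  have "\<bar>x I - x J\<bar> \<in> ?S" using assms(2,3) by blast
  then have "\<bar>x I - x J\<bar> \<le> Max ?S" using Max_ge[OF fin] by blast
  then show ?thesis unfolding E_set_def using assms(1,4) by simp
qed

lemma ctrl_bound:
  assumes n3: "n \<ge> 3" and k: "k < n" and w: "0 < \<omega> k" "\<omega> k < 1" and eta: "\<eta> > 0"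
    and dm: "0 < dm" "dm \<le> a_coef n \<omega> \<eta> k / 2"
    and del: "0 < \<delta>" "\<delta> \<le> \<eta> / 2" "\<delta> \<le> (1 - \<theta>) * \<eta>" and th: "0 < \<theta>" "\<theta> < 1"
  shows "- \<eta> + \<delta> \<le> ctrl n \<omega> \<eta> K N z dm \<theta> I J t x l k \<and> ctrl n \<omega> \<eta> K N z dm \<theta> I J t x l k \<le> \<eta> - \<delta>"
proof -
  define d where "d = max (- dm) (min dm (z - xave n x))"
  have d: "\<bar>d\<bar> \<le> dm" unfolding d_def using dm(1) by (auto simp: abs_le_iff)
  define D where "D = (real n - 1) * (1 - \<omega> k)"
  have Dp: "D > 0" unfolding D_def using n3 w by simp
  have np: "real n > 0" using n3 by simp
  have "\<bar>d * real n / D\<bar> = \<bar>d\<bar> * real n / D" using Dp np by (simp add: abs_mult abs_div_pos)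
  also have "\<dots> \<le> dm * real n / D" using d Dp np by (simp add: divide_right_mono mult_right_mono)
  also have "\<dots> \<le> (a_coef n \<omega> \<eta> k / 2) * real n / D"
    by (rule divide_right_mono[OF mult_right_mono]) (use dm Dp np in auto)
  also have "\<dots> = \<eta> / 2" unfolding a_coef_def D_def[symmetric] using Dp np by (simp add: field_simps)
  finally have ph2: "\<bar>d * real n / D\<bar> \<le> \<eta> / 2" .
  have tt: "\<theta> * \<eta> \<le> \<eta> - \<delta>" using del(3) by (simp add: algebra_simps)
  have V: "- (\<eta> / 2) \<le> d * real n / D" "d * real n / D \<le> \<eta> / 2" using ph2 unfolding abs_le_iff by linarith+
  have tp: "0 \<le> \<theta> * \<eta>" using th eta by simp
  have "ctrl n \<omega> \<eta> K N z dm \<theta> I J t x l k = 0 \<or> ctrl n \<omega> \<eta> K N z dm \<theta> I J t x l k = d * real n / D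
     \<or> ctrl n \<omega> \<eta> K N z dm \<theta> I J t x l k = \<theta> * \<eta> \<or> ctrl n \<omega> \<eta> K N z dm \<theta> I J t x l k = - (\<theta> * \<eta>)"
    unfolding ctrl_def d_def[symmetric] D_def[symmetric] by auto
  then show ?thesis using V tt tp del(1,2) by (elim disjE; linarith)
qed

theorem lemma9:
  fixes n :: nat and r \<omega> :: "nat \<Rightarrow> real" and \<eta> \<epsilon> :: real
  assumes "n \<ge> 3"
    and "\<forall>i<n. 0 < r i \<and> r i \<le> 1"
    and "\<forall>i<n. 0 < \<omega> i \<and> \<omega> i < 1"
    and "\<eta> > 0"
    and "\<epsilon> > 0"
  shows "ft_robust_reachable n r \<omega> \<eta> (E_set n (c_eps n r \<omega> \<eta> \<epsilon>))"
proof -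
  note n3 = assms(1) and rr = assms(2) and wpos = assms(3) and eta = assms(4) and eps = assms(5)
  have n0: "n > 0" "n > 1" using n3 by auto
  have rpos: "\<forall>k<n. 0 \<le> r k" using rr by (simp add: less_imp_le)
  define Sset where "Sset = {c_coef n r \<omega> \<eta> i j | i j. i < n \<and> j < n \<and> i \<noteq> j}"
  have "Sset \<subseteq> (\<lambda>p. c_coef n r \<omega> \<eta> (fst p) (snd p)) ` ({..<n} \<times> {..<n})" unfolding Sset_def by force
  then have finS: "finite Sset" by (rule finite_subset) simp
  have "c_coef n r \<omega> \<eta> 0 1 \<in> Sset" unfolding Sset_def using n3 by force
  then have neS: "Sset \<noteq> {}" by blast
  have "Max Sset \<in> Sset" using Max_in[OF finS neS] .
  then obtain I J where IJ: "I < n" "J < n" "I \<noteq> J" and cI: "Max Sset = c_coef n r \<omega> \<eta> I J"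
    unfolding Sset_def by blast
  have ceps: "c_eps n r \<omega> \<eta> \<epsilon> = c_coef n r \<omega> \<eta> I J - \<epsilon>" unfolding c_eps_def Sset_def[symmetric] cI ..
  have apos: "\<And>k. k < n \<Longrightarrow> 0 < a_coef n \<omega> \<eta> k"
  proof -
    fix k assume "k < n"
    then have "0 < 1 - \<omega> k" using wpos by simp
    moreover have "0 < real n - 1" using n3 by simp
    ultimately show "0 < a_coef n \<omega> \<eta> k" unfolding a_coef_def using eta n0 by simp
  qed
  have neN: "{..<n} \<noteq> {}" using n0 by auto
  define wm where "wm = Min (\<omega> ` {..<n})"
  have "wm \<in> \<omega> ` {..<n}" unfolding wm_def using Min_in[OF finite_imageI[OF finite_lessThan]] neN by blast
  then have wm0: "0 < wm" using wpos by auto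
  have wmle: "\<forall>k<n. wm \<le> \<omega> k" unfolding wm_def by simp
  have wm1: "wm < 1" using wmle wpos n0 by force
  define rmin where "rmin = Min (r ` {..<n})"
  have "rmin \<in> r ` {..<n}" unfolding rmin_def using Min_in[OF finite_imageI[OF finite_lessThan]] neN by blast
  then have rm0: "0 < rmin" using rr by auto
  have rmle: "\<forall>k<n. rmin \<le> r k" unfolding rmin_def by simp
  define amin where "amin = Min (a_coef n \<omega> \<eta> ` {..<n})"
  have "amin \<in> a_coef n \<omega> \<eta> ` {..<n}" unfolding amin_def using Min_in[OF finite_imageI[OF finite_lessThan]] neN by blast
  then have am0: "0 < amin" using apos by auto
  have amle: "\<forall>k<n. amin \<le> a_coef n \<omega> \<eta> k" unfolding amin_def by simp
  define dm where "dm = amin / 2"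
  have dm0: "0 < dm" unfolding dm_def using am0 by simp
  have dmle: "\<forall>k<n. dm \<le> a_coef n \<omega> \<eta> k / 2" unfolding dm_def using amle by auto
  define aI where "aI = a_coef n \<omega> \<eta> I"
  define aJ where "aJ = a_coef n \<omega> \<eta> J"
  define hI where "hI = h_coef n r \<omega> \<eta> I J"
  define hJ where "hJ = h_coef n r \<omega> \<eta> J I"
  have aIp: "0 < aI" and aJp: "0 < aJ" unfolding aI_def aJ_def using apos IJ by auto
  obtain K where K: "(1 - wm) ^ K < rmin / 4" using real_arch_pow_inv[of "rmin / 4" "1 - wm"] rm0 wm0 by auto
  obtain N :: nat where N: "2 / dm < real N" using reals_Archimedean2 by blast
  have NN: "real N * dm / 2 > 1" using N dm0 by (simp add: field_simps)
  define Bh where "Bh = \<bar>hI\<bar> + \<bar>hJ\<bar> + aI + aJ + 1"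
  have Bh0: "Bh > 0" unfolding Bh_def using aIp aJp by simp
  define q1 where "q1 = 1 - \<epsilon> / (4 * Bh)"
  define q2 where "q2 = (if r I < aI + aJ then r I / (aI + aJ) else 0)"
  define q3 where "q3 = (if r I < aI then r I / aI else 0)"
  define q4 where "q4 = (if r J < aJ + aI then r J / (aJ + aI) else 0)"
  define q5 where "q5 = (if r J < aJ then r J / aJ else 0)"
  define q6 where "q6 = (if aI + aJ > 1 then 1 / (aI + aJ) else 0)"
  define q where "q = max (1 / 2) (max q1 (max q2 (max q3 (max q4 (max q5 q6)))))"
  have q1l: "q1 < 1" unfolding q1_def using eps Bh0 by simp
  have q2l: "q2 < 1" unfolding q2_def using aIp aJp by (simp add: divide_less_eq)
  have q3l: "q3 < 1" unfolding q3_def using aIp by (simp add: divide_less_eq)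
  have q4l: "q4 < 1" unfolding q4_def using aIp aJp by (simp add: divide_less_eq)
  have q5l: "q5 < 1" unfolding q5_def using aJp by (simp add: divide_less_eq)
  have q6l: "q6 < 1" unfolding q6_def by (simp add: divide_less_eq)
  have ql: "q < 1" unfolding q_def using q1l q2l q3l q4l q5l q6l by simp
  define \<theta> where "\<theta> = (1 + q) / 2"
  have thq: "q < \<theta>" "\<theta> < 1" unfolding \<theta>_def using ql by auto
  have qge: "1/2 \<le> q" "q1 \<le> q" "q2 \<le> q" "q3 \<le> q" "q4 \<le> q" "q5 \<le> q" "q6 \<le> q" unfolding q_def by (auto simp: le_max_iff_disj)
  have th0: "0 < \<theta>" using thq qge by linarith
  have thB: "(1 - \<theta>) * Bh \<le> \<epsilon> / 4"
  proof -
    have "1 - \<theta> < \<epsilon> / (4 * Bh)" using thq qge unfolding q1_def by linarith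
    then have "(1 - \<theta>) * Bh \<le> \<epsilon> / (4 * Bh) * Bh" using Bh0 by (intro mult_right_mono) auto
    also have "\<dots> = \<epsilon> / 4" using Bh0 by simp
    finally show ?thesis .
  qed
  have th2: "r I < aI + aJ \<Longrightarrow> r I < \<theta> * (aI + aJ)"
  proof -
    assume h: "r I < aI + aJ"
    then have "r I / (aI + aJ) < \<theta>" using thq qge unfolding q2_def by simp
    then show ?thesis using aIp aJp by (simp add: pos_divide_less_eq mult.commute)
  qed
  have th3: "r I < aI \<Longrightarrow> r I < \<theta> * aI"
  proof -
    assume h: "r I < aI"
    then have "r I / aI < \<theta>" using thq qge unfolding q3_def by simp
    then show ?thesis using aIp by (simp add: pos_divide_less_eq mult.commute)
  qed
  have th4: "r J < aJ + aI \<Longrightarrow> r J < \<theta> * (aJ + aI)"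
  proof -
    assume h: "r J < aJ + aI"
    then have "r J / (aJ + aI) < \<theta>" using thq qge unfolding q4_def by simp
    then show ?thesis using aIp aJp by (simp add: pos_divide_less_eq mult.commute)
  qed
  have th5: "r J < aJ \<Longrightarrow> r J < \<theta> * aJ"
  proof -
    assume h: "r J < aJ"
    then have "r J / aJ < \<theta>" using thq qge unfolding q5_def by simp
    then show ?thesis using aJp by (simp add: pos_divide_less_eq mult.commute)
  qed
  have th6: "aI + aJ > 1 \<Longrightarrow> 1 \<le> \<theta> * (aI + aJ)"
  proof -
    assume h: "aI + aJ > 1"
    then have "1 / (aI + aJ) < \<theta>" using thq qge unfolding q6_def by simp
    then show ?thesis using aIp aJp by (simp add: pos_divide_less_eq mult.commute)
  qed
  define gI where "gI = (if r I < aI then \<theta> * aI - r I else if r I < aI + aJ then min (r I - \<theta> * aI) (\<theta> * (aI + aJ) - r I)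
      else r I - \<theta> * (aI + aJ))"
  define gJ where "gJ = (if r J < aJ then \<theta> * aJ - r J else if r J < aJ + aI then min (r J - \<theta> * aJ) (\<theta> * (aJ + aI) - r J)
      else r J - \<theta> * (aJ + aI))"
  have taI: "\<theta> * aI < aI" "\<theta> * aJ < aJ" "\<theta> * (aI + aJ) < aI + aJ" "\<theta> * (aJ + aI) < aJ + aI"
    using thq aIp aJp by auto
  have gI0: "0 < gI" unfolding gI_def using th2 th3 taI by auto
  have gJ0: "0 < gJ" unfolding gJ_def using th4 th5 taI by auto
  define \<delta> where "\<delta> = min (\<eta> / 2) (min ((1 - \<theta>) * \<eta>) (min (rmin / (8 * (real K + 1)))
      (min (dm / 2) (min (gI / 8) (min (gJ / 8) (\<epsilon> / 32))))))"
  have d0: "0 < \<delta>" unfolding \<delta>_def using eta thq rm0 dm0 gI0 gJ0 eps by simp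
  have dle: "\<delta> \<le> \<eta> / 2" "\<delta> \<le> (1 - \<theta>) * \<eta>" "\<delta> \<le> rmin / (8 * (real K + 1))" "\<delta> \<le> dm / 2"
    "\<delta> \<le> gI / 8" "\<delta> \<le> gJ / 8" "\<delta> \<le> \<epsilon> / 32" unfolding \<delta>_def
    by (meson min.cobounded1 min.cobounded2 order.trans)+
  have dK: "\<delta> * (8 * (real K + 1)) \<le> rmin" using dle(3) by (simp add: le_divide_eq)
  have e8: "\<delta> * (8 * (real K + 1)) = 8 * (real K * \<delta>) + 8 * \<delta>" by (simp add: algebra_simps)
  have e2: "2 * real K * \<delta> = 2 * (real K * \<delta>)" by simp
  have kd: "0 \<le> real K * \<delta>" using d0 by simp
  have dK2: "(1 - wm) ^ K + 2 * real K * \<delta> \<le> rmin / 2" using K dK d0 e8 e2 kd by linarith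
  have d4: "4 * \<delta> \<le> rmin" using dK d0 e8 kd by linarith
  have d6: "6 * \<delta> \<le> \<epsilon> / 4" using dle(7) d0 by linarith
  have dlt: "\<delta> < \<eta>" using dle(1) eta by simp
  have gapI: "gapok n r \<omega> \<eta> I J \<theta> (2 * \<delta>)"
    unfolding gapok_def aI_def[symmetric] aJ_def[symmetric] using gI0 dle(5) d0 unfolding gI_def
    by (auto split: if_splits)
  have gapJ: "gapok n r \<omega> \<eta> J I \<theta> (2 * \<delta>)"
    unfolding gapok_def aI_def[symmetric] aJ_def[symmetric] using gJ0 dle(6) d0 unfolding gJ_def
    by (auto split: if_splits)
  define z where "z = (if aI + aJ > 1 then aJ / (aI + aJ) else
      (if hJ \<le> aJ then aJ else if hI \<le> aI then 1 - aI else min hJ (1 - aI)))"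
  have zcase: "(aI + aJ > 1 \<and> 1 \<le> z + \<theta> * aI \<and> z - \<theta> * aJ \<le> 0 \<and> 0 \<le> z \<and> z \<le> 1)
      \<or> (aI + aJ \<le> 1 \<and> aJ \<le> z \<and> z \<le> 1 - aI \<and>
         z = (if hJ \<le> aJ then aJ else if hI \<le> aI then 1 - aI else min hJ (1 - aI)))"
  proof (cases "aI + aJ > 1")
    case True
    have zz: "z = aJ / (aI + aJ)" unfolding z_def using True by simp
    have s: "aI + aJ > 0" using aIp aJp by linarith
    have "aI / (aI + aJ) \<le> \<theta> * aI"
    proof -
      have "aI * 1 \<le> aI * (\<theta> * (aI + aJ))" using th6[OF True] aIp by (simp add: mult_left_mono)
      then show ?thesis using s by (simp add: divide_le_eq algebra_simps)
    qed
    moreover have "aJ / (aI + aJ) \<le> \<theta> * aJ"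
    proof -
      have "aJ * 1 \<le> aJ * (\<theta> * (aI + aJ))" using th6[OF True] aJp by (simp add: mult_left_mono)
      then show ?thesis using s by (simp add: divide_le_eq algebra_simps)
    qed
    moreover have "aJ / (aI + aJ) = 1 - aI / (aI + aJ)" using s by (simp add: field_simps)
    moreover have "0 \<le> aJ / (aI + aJ)" "aJ / (aI + aJ) \<le> 1" using s aIp aJp by (simp_all add: divide_le_eq)
    ultimately show ?thesis using True zz by auto
  next
    case False
    have zz: "z = (if hJ \<le> aJ then aJ else if hI \<le> aI then 1 - aI else min hJ (1 - aI))" unfolding z_def using False by simp
    show ?thesis using False zz by auto
  qed
  have z01: "0 \<le> z" "z \<le> 1" using zcase aIp aJp by auto
  define uS where "uS = (\<lambda>H :: (nat \<Rightarrow> real) list. ctrl n \<omega> \<eta> K N z dm \<theta> I J (length H - 1) (last H))"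
  define S where "S = E_set n (c_eps n r \<omega> \<eta> \<epsilon>)"
  show ?thesis unfolding ft_robust_reachable_def S_def[symmetric]
  proof (intro exI conjI allI impI)
    show "0 < K + N + 2" by simp
    show "0 < \<delta>" "\<delta> < \<eta>" using d0 dlt by auto
    fix x0 assume x0: "in_cube n x0"
    show "x0 \<in> S \<or> (\<exists>\<delta>S uS.
           (\<forall>H i. i < n \<longrightarrow> \<delta> \<le> \<delta>S H i \<and> \<delta>S H i < \<eta>) \<and>
           (\<forall>H i j. i < n \<longrightarrow> j < n \<longrightarrow> - \<eta> + \<delta>S H i \<le> uS H j i \<and> uS H j i \<le> \<eta> - \<delta>S H i) \<and>
           (\<forall>bS. (\<forall>H i j. i < n \<longrightarrow> j < n \<longrightarrow> - \<delta>S H i \<le> bS H j i \<and> bS H j i \<le> \<delta>S H i) \<longrightarrow>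
              (\<exists>t\<ge>1. t \<le> K + N + 2 \<and> last (hist n r \<omega> uS bS x0 t) \<in> S)))"
    proof (rule disjI2, rule exI[of _ "\<lambda>H i. \<delta>"], rule exI[of _ uS], intro conjI)
      show "\<forall>H i. i < n \<longrightarrow> \<delta> \<le> \<delta> \<and> \<delta> < \<eta>" using dlt by simp
    next
      show "\<forall>H i j. i < n \<longrightarrow> j < n \<longrightarrow> - \<eta> + \<delta> \<le> uS H j i \<and> uS H j i \<le> \<eta> - \<delta>"
      proof (intro allI impI)
        fix H :: "(nat \<Rightarrow> real) list" and i j assume i: "i < n" and j: "j < n"
        show "- \<eta> + \<delta> \<le> uS H j i \<and> uS H j i \<le> \<eta> - \<delta>"
          unfolding uS_def
          by (rule ctrl_bound[OF n3 i _ _ eta dm0 _ d0 dle(1,2) th0 thq(2)]) (use wpos dmle i in auto)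
      qed
    next
      show "\<forall>bS. (\<forall>H i j. i < n \<longrightarrow> j < n \<longrightarrow> - \<delta> \<le> bS H j i \<and> bS H j i \<le> \<delta>) \<longrightarrow>
              (\<exists>t\<ge>1. t \<le> K + N + 2 \<and> last (hist n r \<omega> uS bS x0 t) \<in> S)"
      proof (intro allI impI)
      fix bS :: "(nat \<Rightarrow> real) list \<Rightarrow> nat \<Rightarrow> nat \<Rightarrow> real"
      assume bS: "\<forall>H i j. i < n \<longrightarrow> j < n \<longrightarrow> - \<delta> \<le> bS H j i \<and> bS H j i \<le> \<delta>"
      define X where "X = (\<lambda>t. last (hist n r \<omega> uS bS x0 t))"
      define B where "B = (\<lambda>t. bS (hist n r \<omega> uS bS x0 t))"
      have X0: "\<forall>l<n. 0 \<le> X 0 l \<and> X 0 l \<le> 1" using x0 unfolding X_def in_cube_def by simp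
      have Xs: "\<forall>t. X (Suc t) = step n r \<omega> (X t) (ctrl n \<omega> \<eta> K N z dm \<theta> I J t (X t)) (B t)"
      proof
        fix t
        have a: "X (Suc t) = step n r \<omega> (X t) (uS (hist n r \<omega> uS bS x0 t)) (B t)"
          unfolding X_def B_def by (rule hist_lastS)
        have b: "uS (hist n r \<omega> uS bS x0 t) = ctrl n \<omega> \<eta> K N z dm \<theta> I J t (X t)"
          unfolding uS_def X_def hist_len by simp
        show "X (Suc t) = step n r \<omega> (X t) (ctrl n \<omega> \<eta> K N z dm \<theta> I J t (X t)) (B t)" using a b by simp
      qed
      have Bb: "\<forall>t. \<forall>l<n. \<forall>k<n. \<bar>B t l k\<bar> \<le> \<delta>" unfolding B_def
      proof (intro allI impI)
        fix t l k assume "l < n" "k < n"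
        then have "- \<delta> \<le> bS (hist n r \<omega> uS bS x0 t) l k \<and> bS (hist n r \<omega> uS bS x0 t) l k \<le> \<delta>" using bS by blast
        then show "\<bar>bS (hist n r \<omega> uS bS x0 t) l k\<bar> \<le> \<delta>" by (simp add: abs_le_iff)
      qed
      have cases: "(a_coef n \<omega> \<eta> I + a_coef n \<omega> \<eta> J > 1 \<and> 1 \<le> z + \<theta> * a_coef n \<omega> \<eta> I \<and> z - \<theta> * a_coef n \<omega> \<eta> J \<le> 0)
      \<or> (a_coef n \<omega> \<eta> I + a_coef n \<omega> \<eta> J \<le> 1 \<and> a_coef n \<omega> \<eta> J \<le> z \<and> z \<le> 1 - a_coef n \<omega> \<eta> I
         \<and> gapok n r \<omega> \<eta> I J \<theta> (2 * \<delta>) \<and> gapok n r \<omega> \<eta> J I \<theta> (2 * \<delta>)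
         \<and> (1 - \<theta>) * (\<bar>h_coef n r \<omega> \<eta> I J\<bar> + \<bar>h_coef n r \<omega> \<eta> J I\<bar> + a_coef n \<omega> \<eta> I + a_coef n \<omega> \<eta> J + 1) \<le> \<epsilon> / 4
         \<and> z = (if h_coef n r \<omega> \<eta> J I \<le> a_coef n \<omega> \<eta> J then a_coef n \<omega> \<eta> J
                else if h_coef n r \<omega> \<eta> I J \<le> a_coef n \<omega> \<eta> I then 1 - a_coef n \<omega> \<eta> I
                else min (h_coef n r \<omega> \<eta> J I) (1 - a_coef n \<omega> \<eta> I)))"
        using zcase gapI gapJ thB unfolding aI_def[symmetric] aJ_def[symmetric] hI_def[symmetric] hJ_def[symmetric] Bh_def
        by blast
      obtain t where t: "1 \<le> t" "t \<le> K + N + 2" "c_coef n r \<omega> \<eta> I J - \<epsilon> \<le> \<bar>X t I - X t J\<bar>"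
        using core_final[OF n3 rpos wpos eta wm0 wmle rm0 rmle dm0 dmle d0 dK2 dle(4) d4 NN z01 X0 Xs Bb IJ th0 thq(2) eps d6 cases]
        by blast
      have cube: "in_cube n (X t)"
      proof -
        obtain t' where "t = Suc t'" using t(1) by (cases t) auto
        then show ?thesis unfolding in_cube_def using Xs step_range by simp
      qed
      have "X t \<in> S" unfolding S_def ceps by (rule E_mem[OF cube IJ(1,2) t(3)])
      then show "\<exists>t\<ge>1. t \<le> K + N + 2 \<and> last (hist n r \<omega> uS bS x0 t) \<in> S" using t unfolding X_def by blast
      qed
    qed
  qed
qed

end
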